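(* Let $r\ge 3$ be an integer and let $G$ be a connected $r$-regular graph of order $n$. (i) If $G$ is not (isomorphic to) the incidence graph of a projective plane of order $r-1$, then $$\gamma_{\times (r-1),t}(G)\le \frac{r(r-1)-1}{r(r-1)}\,n .$$ (ii) If $G$ is the incidence graph of a projective plane of order $r-1$ (so $n=2(r(r-1)+1)$), then $$\gamma_{\times (r-1),t}(G)=\frac{r(r-1)}{r(r-1)+1}\,n=2r(r-1).$$
   Context: All graphs are finite and simple. For a vertex $v$ of $G$, $N(v)=\{u\in V(G): uv\in E(G)\}$ is its open neighborhood. For a positive integer $k$, a $k$-tuple total dominating set of $G$ is a set $S\subseteq V(G)$ with $|N(v)\cap S|\ge k$ for every $v\in V(G)$; $\gamma_{\times k,t}(G)$ denotes the minimum cardinality of such a set. A projective plane of order $q$ consists of $q^2+q+1$ points and $q^2+q+1$ lines with an incidence relation such that every line is incident with exactly $q+1$ points, every point with exactly $q+1$ lines, any two distinct points lie on exactly one common line, and any two distinct lines share exactly one common point. Its incidence graph is the bipartite graph whose vertices are the points and the lines, a point being adjacent to a line iff they are incident. *)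

theory Defs
  imports Complex_Main
begin

definition simple_graph :: "'a set \<Rightarrow> ('a \<Rightarrow> 'a \<Rightarrow> bool) \<Rightarrow> bool" where
  "simple_graph V E \<longleftrightarrow> finite V \<and> (\<forall>u v. E u v \<longrightarrow> u \<in> V \<and> v \<in> V)
     \<and> (\<forall>u v. E u v \<longrightarrow> E v u) \<and> (\<forall>v. \<not> E v v)"

definition nbhd :: "'a set \<Rightarrow> ('a \<Rightarrow> 'a \<Rightarrow> bool) \<Rightarrow> 'a \<Rightarrow> 'a set" where
  "nbhd V E v = {u \<in> V. E u v}"

definition regular :: "'a set \<Rightarrow> ('a \<Rightarrow> 'a \<Rightarrow> bool) \<Rightarrow> nat \<Rightarrow> bool" where
  "regular V E r \<longleftrightarrow> (\<forall>v \<in> V. card (nbhd V E v) = r)"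

definition connected_graph :: "'a set \<Rightarrow> ('a \<Rightarrow> 'a \<Rightarrow> bool) \<Rightarrow> bool" where
  "connected_graph V E \<longleftrightarrow> (\<forall>u \<in> V. \<forall>v \<in> V. E\<^sup>*\<^sup>* u v)"

definition ktuple_tds :: "'a set \<Rightarrow> ('a \<Rightarrow> 'a \<Rightarrow> bool) \<Rightarrow> nat \<Rightarrow> 'a set \<Rightarrow> bool" where
  "ktuple_tds V E k S \<longleftrightarrow> S \<subseteq> V \<and> (\<forall>v \<in> V. card (nbhd V E v \<inter> S) \<ge> k)"

definition ktuple_tdn :: "'a set \<Rightarrow> ('a \<Rightarrow> 'a \<Rightarrow> bool) \<Rightarrow> nat \<Rightarrow> nat" where
  "ktuple_tdn V E k = Min {card S | S. ktuple_tds V E k S}"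

definition proj_plane :: "'p set \<Rightarrow> 'l set \<Rightarrow> ('p \<Rightarrow> 'l \<Rightarrow> bool) \<Rightarrow> nat \<Rightarrow> bool" where
  "proj_plane P L I q \<longleftrightarrow> finite P \<and> finite L
     \<and> card P = q^2 + q + 1 \<and> card L = q^2 + q + 1
     \<and> (\<forall>l \<in> L. card {p \<in> P. I p l} = q + 1)
     \<and> (\<forall>p \<in> P. card {l \<in> L. I p l} = q + 1)
     \<and> (\<forall>p1 \<in> P. \<forall>p2 \<in> P. p1 \<noteq> p2 \<longrightarrow> (\<exists>!l. l \<in> L \<and> I p1 l \<and> I p2 l))
     \<and> (\<forall>l1 \<in> L. \<forall>l2 \<in> L. l1 \<noteq> l2 \<longrightarrow> (\<exists>!p. p \<in> P \<and> I p l1 \<and> I p l2))"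

definition inc_vertices :: "'p set \<Rightarrow> 'l set \<Rightarrow> ('p + 'l) set" where
  "inc_vertices P L = Inl ` P \<union> Inr ` L"

fun inc_adj :: "'p set \<Rightarrow> 'l set \<Rightarrow> ('p \<Rightarrow> 'l \<Rightarrow> bool) \<Rightarrow> ('p + 'l) \<Rightarrow> ('p + 'l) \<Rightarrow> bool" where
  "inc_adj P L I (Inl p) (Inr l) = (p \<in> P \<and> l \<in> L \<and> I p l)"
| "inc_adj P L I (Inr l) (Inl p) = (p \<in> P \<and> l \<in> L \<and> I p l)"
| "inc_adj P L I _ _ = False"

definition graph_iso :: "'a set \<Rightarrow> ('a \<Rightarrow> 'a \<Rightarrow> bool) \<Rightarrow> 'b set \<Rightarrow> ('b \<Rightarrow> 'b \<Rightarrow> bool) \<Rightarrow> ('a \<Rightarrow> 'b) \<Rightarrow> bool" where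
  "graph_iso V E V' E' f \<longleftrightarrow> bij_betw f V V' \<and> (\<forall>u \<in> V. \<forall>v \<in> V. E u v \<longleftrightarrow> E' (f u) (f v))"

text \<open>G is isomorphic to the incidence graph of some projective plane of order q.
  Points and lines may be taken from the vertex type (they inject into V).\<close>
definition is_pp_incidence_graph :: "'a set \<Rightarrow> ('a \<Rightarrow> 'a \<Rightarrow> bool) \<Rightarrow> nat \<Rightarrow> bool" where
  "is_pp_incidence_graph V E q \<longleftrightarrow>
     (\<exists>(P::'a set) (L::'a set) I f. proj_plane P L I q
        \<and> graph_iso V E (inc_vertices P L) (inc_adj P L I) f)"

end

theory Submission
  imports Defs "HOL-Number_Theory.Cong"
begin


lemma free_color:
  assumes "finite S" "card S < (D::nat)"
  shows "\<exists>c<D. c \<notin> S"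
proof (rule ccontr)
  assume "\<not> ?thesis"
  then have "{0..<D} \<subseteq> S" by auto
  then have "card {0..<D} \<le> card S" using assms(1) by (rule card_mono[rotated])
  then show False using assms(2) by simp
qed

lemma greedy_col:
  fixes adj :: "'a \<Rightarrow> 'a \<Rightarrow> bool"
  assumes fin: "finite K"
    and conn: "\<And>U. U \<subseteq> K \<Longrightarrow> U \<noteq> {} \<Longrightarrow> U \<noteq> K \<Longrightarrow> \<exists>u\<in>U. \<exists>y\<in>K-U. adj u y"
    and deg: "\<And>u. u \<in> K \<Longrightarrow> finite {v. adj u v} \<and> card {v. adj u v} \<le> D"
    and sym: "\<And>u v. adj u v \<Longrightarrow> adj v u"
    and irr: "\<And>u. \<not> adj u u"
    and disj: "X \<inter> K = {}"
    and f0a: "\<forall>x\<in>X. f0 x < D"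
    and f0b: "\<forall>x\<in>X. \<forall>y\<in>X. adj x y \<longrightarrow> f0 x \<noteq> f0 y"
  shows "U \<subseteq> K \<Longrightarrow> U \<noteq> K \<Longrightarrow> \<exists>f. (\<forall>x\<in>X. f x = f0 x) \<and> (\<forall>x\<in>X\<union>U. f x < D)
            \<and> (\<forall>x\<in>X\<union>U. \<forall>y\<in>X\<union>U. adj x y \<longrightarrow> f x \<noteq> f y)"
proof (induction "card U" arbitrary: U rule: less_induct)
  case less
  show ?case
  proof (cases "U = {}")
    case True
    then show ?thesis using f0a f0b by (intro exI[of _ f0]) auto
  next
    case False
    obtain u y where u: "u \<in> U" and y: "y \<in> K - U" and uy: "adj u y"
      using conn[OF less.prems(1) False less.prems(2)] by blast
    define U' where "U' = U - {u}"
    have finU: "finite U" using less.prems(1) fin finite_subset by blast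
    have "card U' < card U" unfolding U'_def using u finU by (metis card_Diff1_less)
    moreover have "U' \<subseteq> K" "U' \<noteq> K" using less.prems unfolding U'_def by auto
    ultimately obtain f where f1: "\<forall>x\<in>X. f x = f0 x" and f2: "\<forall>x\<in>X\<union>U'. f x < D"
      and f3: "\<forall>x\<in>X\<union>U'. \<forall>y\<in>X\<union>U'. adj x y \<longrightarrow> f x \<noteq> f y"
      using less.hyps by blast
    have uK: "u \<in> K" using u less.prems by auto
    have dg: "finite {v. adj u v}" "card {v. adj u v} \<le> D" using deg[OF uK] by auto
    have sub: "{v. adj u v} \<inter> (X \<union> U') \<subseteq> {v. adj u v} - {y}"
      using y disj unfolding U'_def by auto
    have "card ({v. adj u v} \<inter> (X \<union> U')) \<le> card ({v. adj u v} - {y})"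
      by (rule card_mono) (use dg sub in auto)
    also have "\<dots> = card {v. adj u v} - 1" using uy dg by simp
    finally have "card ({v. adj u v} \<inter> (X \<union> U')) \<le> card {v. adj u v} - 1" .
    then have c1: "card ({v. adj u v} \<inter> (X \<union> U')) < D"
    proof -
      have "card {v. adj u v} > 0" using dg(1) uy card_gt_0_iff by blast
      then show ?thesis using \<open>card ({v. adj u v} \<inter> (X \<union> U')) \<le> card {v. adj u v} - 1\<close> dg(2) by linarith
    qed
    have "card (f ` ({v. adj u v} \<inter> (X \<union> U'))) < D"
      using c1 card_image_le dg(1) le_less_trans by (metis finite_Int)
    then obtain c where c: "c < D" "c \<notin> f ` ({v. adj u v} \<inter> (X \<union> U'))"
      using free_color dg(1) by (metis finite_Int finite_imageI)
    define g where "g = f(u := c)"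
    have uX: "u \<notin> X" using uK disj by auto
    have XU: "X \<union> U = insert u (X \<union> U')" using u unfolding U'_def by auto
    have uU': "u \<notin> X \<union> U'" using uX unfolding U'_def by auto
    show ?thesis
    proof (intro exI[of _ g] conjI ballI impI)
      fix x assume "x \<in> X" then show "g x = f0 x" using f1 uX g_def by auto
    next
      fix x assume "x \<in> X \<union> U" then show "g x < D" using f2 c XU g_def by auto
    next
      fix x z assume x: "x \<in> X \<union> U" and z: "z \<in> X \<union> U" and a: "adj x z"
      show "g x \<noteq> g z"
      proof (cases "x = u")
        case True
        then have "z \<noteq> u" using a irr by auto
        then have "z \<in> X \<union> U'" using z XU by auto
        then show ?thesis using True a c g_def \<open>z \<noteq> u\<close> by auto
      next
        case False
        then have xx: "x \<in> X \<union> U'" using x XU by auto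
        show ?thesis
        proof (cases "z = u")
          case True
          then show ?thesis using xx a sym c g_def False by force
        next
          case False
          then have "z \<in> X \<union> U'" using z XU by auto
          then show ?thesis using xx f3 a g_def False \<open>x \<noteq> u\<close> by auto
        qed
      qed
    qed
  qed
qed


lemma pigeon_class:
  assumes "finite K" "\<forall>x\<in>K. f x < (D::nat)" "D > 0"
  shows "\<exists>i<D. card K \<le> D * card {x\<in>K. f x = i}"
proof (rule ccontr)
  assume H: "\<not> ?thesis"
  have KU: "K = (\<Union>i\<in>{..<D}. {x\<in>K. f x = i})" using assms(2) by auto
  have "card K \<le> (\<Sum>i<D. card {x\<in>K. f x = i})"
    by (subst KU) (rule card_UN_le, simp)
  then have "D * card K \<le> D * (\<Sum>i<D. card {x\<in>K. f x = i})" by simp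
  also have "\<dots> = (\<Sum>i<D. D * card {x\<in>K. f x = i})"
    by (rule sum_distrib_left)
  also have "\<dots> < (\<Sum>i<D. card K)"
  proof (rule sum_strict_mono)
    show "finite {..<D}" by simp
    show "{..<D} \<noteq> {}" using assms(3) by auto
    fix i assume "i \<in> {..<D}" then show "D * card {x\<in>K. f x = i} < card K" using H by auto
  qed
  also have "\<dots> = D * card K" by simp
  finally show False by simp
qed
lemma conn_leave:
  assumes c: "\<forall>p\<in>K. \<forall>q\<in>K. R\<^sup>*\<^sup>* p q" and R: "\<And>u v. R u v \<Longrightarrow> u\<in>K \<and> v\<in>K"
  shows "U \<subseteq> K \<Longrightarrow> U \<noteq> {} \<Longrightarrow> U \<noteq> K \<Longrightarrow> \<exists>u\<in>U. \<exists>y\<in>K-U. R u y"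
proof -
  assume a: "U \<subseteq> K" "U \<noteq> {}" "U \<noteq> K"
  obtain u0 where u0: "u0 \<in> U" using a by auto
  obtain q where q: "q \<in> K" "q \<notin> U" using a by auto
  have "R\<^sup>*\<^sup>* u0 q" using c u0 q a by auto
  then have "q \<in> U \<or> (\<exists>u\<in>U. \<exists>y\<in>K-U. R u y)"
  proof (induction rule: rtranclp_induct)
    case base then show ?case using u0 by auto
  next
    case (step y z)
    then show ?case using R by blast
  qed
  then show ?thesis using q by auto
qed

lemma conn_closed:
  assumes c: "\<forall>p\<in>K. \<forall>q\<in>K. R\<^sup>*\<^sup>* p q" and R: "\<And>u v. R u v \<Longrightarrow> u\<in>K \<and> v\<in>K"
    and X: "X \<subseteq> K" "X \<noteq> {}" "\<And>x y. x \<in> X \<Longrightarrow> R x y \<Longrightarrow> y \<in> X"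
  shows "X = K"
  using conn_leave[OF c R X(1,2)] X(3) by blast

locale incs =
  fixes P :: "'p set" and C :: "'c set" and inc :: "'p \<Rightarrow> 'c \<Rightarrow> bool" and r :: nat
  assumes finP: "finite P" and finC: "finite C"
    and ctsr: "\<And>p. p \<in> P \<Longrightarrow> card {c\<in>C. inc p c} = r"
    and ptsr: "\<And>c. c \<in> C \<Longrightarrow> card {p\<in>P. inc p c} = r"
    and r3: "r \<ge> 3"
begin

definition cts where "cts p = {c\<in>C. inc p c}"
definition pts where "pts c = {p\<in>P. inc p c}"
definition col where "col p q \<longleftrightarrow> p \<noteq> q \<and> (\<exists>c\<in>C. inc p c \<and> inc q c)"
definition nb where "nb p = {q\<in>P. col p q}"
definition RP where "RP u v \<longleftrightarrow> u \<in> P \<and> v \<in> P \<and> col u v"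

lemma col_sym: "col p q \<Longrightarrow> col q p" unfolding col_def by auto
lemma col_irr: "\<not> col p p" unfolding col_def by auto

lemma nb_sub: "p \<in> P \<Longrightarrow> nb p \<subseteq> (\<Union>c\<in>cts p. pts c - {p})"
  unfolding nb_def col_def cts_def pts_def by auto

lemma fin_nb: "finite (nb p)" unfolding nb_def using finP by auto

lemma deg_le: assumes "p \<in> P" shows "card (nb p) \<le> r*(r-1)"
proof -
  have "card (nb p) \<le> card (\<Union>c\<in>cts p. pts c - {p})"
  proof (rule card_mono)
    show "finite (\<Union>c\<in>cts p. pts c - {p})" using finC finP by (auto simp: cts_def pts_def)
  qed (rule nb_sub[OF assms])
  also have "\<dots> \<le> (\<Sum>c\<in>cts p. card (pts c - {p}))"
    by (rule card_UN_le) (simp add: cts_def finC)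
  also have "\<dots> \<le> (\<Sum>c\<in>cts p. r - 1)"
  proof (rule sum_mono)
    fix c assume "c \<in> cts p"
    then show "card (pts c - {p}) \<le> r - 1"
      using ptsr[of c] assms finP by (auto simp: cts_def pts_def card_Diff_singleton)
  qed
  also have "\<dots> = r * (r-1)" using ctsr[OF assms] by (simp add: cts_def)
  finally show ?thesis .
qed


lemma caseA:
  assumes conn: "\<forall>p\<in>P. \<forall>q\<in>P. RP\<^sup>*\<^sup>* p q"
    and d: "d \<in> P" "card (nb d) < r*(r-1)"
  shows "\<exists>T\<subseteq>P. (\<forall>x\<in>T. \<forall>y\<in>T. \<not> col x y) \<and> card P \<le> r*(r-1)*card T"
proof -
  let ?D = "r*(r-1)"
  have RPK: "\<And>u v. RP u v \<Longrightarrow> u\<in>P \<and> v\<in>P" unfolding RP_def by auto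
  have nbeq: "\<And>u. {v. RP u v} = (if u \<in> P then nb u else {})" unfolding RP_def nb_def by auto
  have c1: "\<And>U. U \<subseteq> P \<Longrightarrow> U \<noteq> {} \<Longrightarrow> U \<noteq> P \<Longrightarrow> \<exists>u\<in>U. \<exists>y\<in>P-U. RP u y"
    using conn_leave[OF conn RPK] by blast
  have c2: "\<And>u. u \<in> P \<Longrightarrow> finite {v. RP u v} \<and> card {v. RP u v} \<le> ?D"
    using nbeq deg_le fin_nb by simp
  have c3: "\<And>u v. RP u v \<Longrightarrow> RP v u" unfolding RP_def using col_sym by blast
  have c4: "\<And>u. \<not> RP u u" unfolding RP_def using col_irr by blast
  have c5: "P - {d} \<subseteq> P" "P - {d} \<noteq> P" using d by auto
  obtain f where f2: "\<forall>x\<in>{}\<union>(P-{d}). f x < ?D"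
      and f3: "\<forall>x\<in>{}\<union>(P-{d}). \<forall>y\<in>{}\<union>(P-{d}). RP x y \<longrightarrow> f x \<noteq> f y"
    using greedy_col[of P RP ?D "{}" "\<lambda>_. 0", OF finP c1 c2 c3 c4 _ _ _ c5] by blast
  have "card (f ` nb d) \<le> card (nb d)" by (rule card_image_le[OF fin_nb])
  then have "card (f ` nb d) < ?D" using d(2) by linarith
  then obtain c where c: "c < ?D" "c \<notin> f ` nb d" using free_color[OF finite_imageI[OF fin_nb]] by blast
  define g where "g = f(d := c)"
  have g1: "\<forall>x\<in>P. g x < ?D" using f2 c g_def by auto
  have g2: "\<forall>x\<in>P. \<forall>y\<in>P. col x y \<longrightarrow> g x \<noteq> g y"
  proof (intro ballI impI)
    fix x y assume xy: "x \<in> P" "y \<in> P" "col x y"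
    show "g x \<noteq> g y"
    proof (cases "x = d")
      case True
      then have "y \<noteq> d" "y \<in> nb d" using xy col_irr nb_def by auto
      then show ?thesis using True c g_def by auto
    next
      case False
      show ?thesis
      proof (cases "y = d")
        case True
        then have "x \<in> nb d" using xy col_sym nb_def by auto
        then show ?thesis using True False c g_def by auto
      next
        case False
        then show ?thesis using f3 xy \<open>x \<noteq> d\<close> g_def RP_def by auto
      qed
    qed
  qed
  have Dpos: "?D > 0" using r3 by simp
  obtain i where i: "i < ?D" "card P \<le> ?D * card {x\<in>P. g x = i}"
    using pigeon_class[OF finP g1 Dpos] by blast
  show ?thesis
  proof (rule exI[of _ "{x\<in>P. g x = i}"], intro conjI)
    show "\<forall>x\<in>{x\<in>P. g x = i}. \<forall>y\<in>{x\<in>P. g x = i}. \<not> col x y" using g2 by blast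
  qed (use i in auto)
qed

end


context incs begin

definition Rab where "Rab a b u v \<longleftrightarrow> u \<in> P - {a,b} \<and> v \<in> P - {a,b} \<and> col u v"
definition comp where "comp a b x = {y. (Rab a b)\<^sup>*\<^sup>* x y}"
definition CD where "CD D = {c\<in>C. \<exists>p\<in>D. inc p c}"
definition sc where "sc D z = card (cts z \<inter> CD D)"

lemma Rab_sym: "symp (Rab a b)" unfolding Rab_def symp_def using col_sym by blast

lemma comp_self: "x \<in> comp a b x" unfolding comp_def by simp

lemma comp_sub: assumes "x \<in> P - {a,b}" shows "comp a b x \<subseteq> P - {a,b}"
proof
  fix y assume "y \<in> comp a b x"
  then have "(Rab a b)\<^sup>*\<^sup>* x y" unfolding comp_def by simp
  then show "y \<in> P - {a,b}"
    by (induction rule: rtranclp_induct) (use assms Rab_def in auto)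
qed

lemma comp_sym: "y \<in> comp a b x \<Longrightarrow> x \<in> comp a b y"
  unfolding comp_def using symp_rtranclp[OF Rab_sym] by (simp add: sympD)

lemma comp_trans: "y \<in> comp a b x \<Longrightarrow> z \<in> comp a b y \<Longrightarrow> z \<in> comp a b x"
  unfolding comp_def by simp

lemma comp_eq: "y \<in> comp a b x \<Longrightarrow> comp a b y = comp a b x"
  using comp_sym comp_trans by blast

lemma comp_closed:
  assumes "p \<in> comp a b x" "x \<in> P - {a,b}" "q \<in> P - {a,b}" "col p q"
  shows "q \<in> comp a b x"
proof -
  have "p \<in> P - {a,b}" using comp_sub[OF assms(2)] assms(1) by auto
  then have "Rab a b p q" using assms Rab_def by auto
  then show ?thesis using assms(1) unfolding comp_def by simp
qed

lemma fin_comp: "x \<in> P - {a,b} \<Longrightarrow> finite (comp a b x)"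
proof -
  assume "x \<in> P - {a,b}"
  then have "comp a b x \<subseteq> P" using comp_sub by blast
  then show ?thesis using finP by (rule finite_subset)
qed

lemma pts_sub:
  assumes "x \<in> P - {a,b}" "c \<in> CD (comp a b x)"
  shows "pts c \<subseteq> comp a b x \<union> {a,b}"
proof
  fix q assume q: "q \<in> pts c"
  obtain p where p: "p \<in> comp a b x" "inc p c" "c \<in> C" using assms(2) CD_def by auto
  show "q \<in> comp a b x \<union> {a,b}"
  proof (cases "q \<in> {a,b} \<or> q = p")
    case True then show ?thesis using p by auto
  next
    case False
    then have "col p q" using q p pts_def col_def by auto
    then show ?thesis using comp_closed[OF p(1) assms(1)] q pts_def False by auto
  qed
qed

lemma fin_cts: "finite (cts z)" unfolding cts_def using finC by simp
lemma fin_pts: "finite (pts c)" unfolding pts_def using finP by simp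
lemma fin_CD: "finite (CD D)" unfolding CD_def using finC by simp

lemma card_filter: "finite A \<Longrightarrow> card {x\<in>A. Q x} = (\<Sum>x\<in>A. if Q x then 1 else (0::nat))"
  by (simp add: sum.inter_filter[symmetric])

lemma counting:
  assumes x: "x \<in> P - {a,b}" and ab: "a \<in> P" "b \<in> P" "a \<noteq> b"
  shows "r * card (comp a b x) + sc (comp a b x) a + sc (comp a b x) b = r * card (CD (comp a b x))"
proof -
  define D where "D = comp a b x"
  have DP: "D \<subseteq> P - {a,b}" using comp_sub[OF x] D_def by simp
  have fD: "finite D" using fin_comp[OF x] D_def by simp
  have "r * card D = (\<Sum>p\<in>D. card {c\<in>C. inc p c})"
  proof -
    have "(\<Sum>p\<in>D. card {c\<in>C. inc p c}) = (\<Sum>p\<in>D. r)" using DP ctsr by (intro sum.cong) auto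
    then show ?thesis by simp
  qed
  also have "\<dots> = (\<Sum>p\<in>D. \<Sum>c\<in>C. if inc p c then 1 else 0)"
    using card_filter[OF finC] by simp
  also have "\<dots> = (\<Sum>c\<in>C. \<Sum>p\<in>D. if inc p c then 1 else 0)" by (rule sum.swap)
  also have "\<dots> = (\<Sum>c\<in>C. card {p\<in>D. inc p c})" using card_filter[OF fD] by simp
  also have "\<dots> = (\<Sum>c\<in>CD D. card {p\<in>D. inc p c})"
  proof (rule sum.mono_neutral_right[OF finC])
    show "CD D \<subseteq> C" unfolding CD_def by auto
    show "\<forall>c\<in>C - CD D. card {p \<in> D. inc p c} = 0" unfolding CD_def using fD by auto
  qed
  finally have e1: "r * card D = (\<Sum>c\<in>CD D. card {p\<in>D. inc p c})" .
  have e2: "card {p\<in>D. inc p c} + ((if c \<in> cts a then 1 else 0) + (if c \<in> cts b then 1 else 0)) = r"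
    if c: "c \<in> CD D" for c
  proof -
    have cC: "c \<in> C" using c CD_def by auto
    have ps: "pts c \<subseteq> D \<union> {a,b}" using pts_sub[OF x] c D_def by simp
    have "pts c = {p\<in>D. inc p c} \<union> (pts c \<inter> {a,b})" using ps DP pts_def by auto
    moreover have dj: "{p\<in>D. inc p c} \<inter> (pts c \<inter> {a,b}) = {}" using DP by auto
    moreover have f1: "finite {p\<in>D. inc p c}" using fD by simp
    moreover have f2: "finite (pts c \<inter> {a,b})" by simp
    ultimately have "card (pts c) = card {p\<in>D. inc p c} + card (pts c \<inter> {a,b})"
      using card_Un_disjoint[OF f1 f2 dj] by simp
    moreover have "card (pts c \<inter> {a,b}) = (if c \<in> cts a then 1 else 0) + (if c \<in> cts b then 1 else 0)"
      using ab cC by (auto simp: pts_def cts_def Int_insert_right)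
    moreover have "card (pts c) = r" using ptsr cC pts_def by simp
    ultimately show ?thesis by simp
  qed
  have sz: "sc D z = (\<Sum>c\<in>CD D. if c \<in> cts z then 1 else 0)" for z
  proof -
    have "cts z \<inter> CD D = {c\<in>CD D. c \<in> cts z}" by auto
    then show ?thesis unfolding sc_def using card_filter[OF fin_CD[of D], of "\<lambda>c. c \<in> cts z"] by simp
  qed
  have "r * card D + (sc D a + sc D b) = (\<Sum>c\<in>CD D. card {p\<in>D. inc p c}) +
      ((\<Sum>c\<in>CD D. if c \<in> cts a then 1 else 0) + (\<Sum>c\<in>CD D. if c \<in> cts b then 1 else 0))"
    using e1 sz by simp
  also have "\<dots> = (\<Sum>c\<in>CD D. card {p\<in>D. inc p c} + ((if c \<in> cts a then 1 else 0) + (if c \<in> cts b then 1 else 0)))"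
    by (simp add: sum.distrib)
  also have "\<dots> = (\<Sum>c\<in>CD D. r)" using e2 by (intro sum.cong) auto
  also have "\<dots> = r * card (CD D)" by simp
  finally show ?thesis unfolding D_def by simp
qed


lemma RPK: "RP u v \<Longrightarrow> u \<in> P \<and> v \<in> P" unfolding RP_def by auto

lemma sc_zero: "sc D z = 0 \<Longrightarrow> cts z \<inter> CD D = {}"
  unfolding sc_def using fin_cts by simp

lemma sc_pos:
  assumes conn: "\<forall>p\<in>P. \<forall>q\<in>P. RP\<^sup>*\<^sup>* p q" and x: "x \<in> P - {a,b}" and ab: "a \<in> P" "b \<in> P"
  shows "sc (comp a b x) a + sc (comp a b x) b > 0"
proof (rule ccontr)
  define D where "D = comp a b x"
  assume "\<not> sc (comp a b x) a + sc (comp a b x) b > 0"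
  then have z: "cts a \<inter> CD D = {}" "cts b \<inter> CD D = {}" using sc_zero D_def by auto
  have DP: "D \<subseteq> P - {a,b}" using comp_sub[OF x] D_def by simp
  have "D = P"
  proof (rule conn_closed[OF conn RPK])
    show "D \<subseteq> P" using DP by auto
    show "D \<noteq> {}" using comp_self D_def by auto
    fix p q assume p: "p \<in> D" and pq: "RP p q"
    then obtain c where c: "c \<in> C" "inc p c" "inc q c" "q \<in> P" using RP_def col_def by auto
    then have cD: "c \<in> CD D" using p CD_def by auto
    have "q \<in> pts c" using c pts_def by auto
    then have "q \<in> D \<union> {a,b}" using pts_sub[OF x] cD D_def by auto
    moreover have "q \<noteq> a" using z c cD cts_def by auto
    moreover have "q \<noteq> b" using z c cD cts_def by auto
    ultimately show "q \<in> D" by auto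
  qed
  then show False using DP ab by auto
qed

lemma sc_ge_r:
  assumes conn: "\<forall>p\<in>P. \<forall>q\<in>P. RP\<^sup>*\<^sup>* p q" and x: "x \<in> P - {a,b}" and ab: "a \<in> P" "b \<in> P" "a \<noteq> b"
  shows "sc (comp a b x) a + sc (comp a b x) b \<ge> r"
proof -
  define k where "k = sc (comp a b x) a + sc (comp a b x) b"
  define m where "m = card (comp a b x)"
  define n where "n = card (CD (comp a b x))"
  have e: "r * m + k = r * n" using counting[OF x ab] k_def m_def n_def by simp
  have k0: "k > 0" using sc_pos[OF conn x ab(1,2)] k_def by simp
  have "r * m < r * n" using e k0 by linarith
  then have "m < n" by simp
  then have "m + 1 \<le> n" by simp
  then have "r * (m + 1) \<le> r * n" by (rule mult_le_mono2)
  then show ?thesis using e k_def by simp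
qed

lemma CD_disj:
  assumes x: "x \<in> P - {a,b}" and y: "y \<in> P - {a,b}" "y \<notin> comp a b x"
  shows "CD (comp a b x) \<inter> CD (comp a b y) = {}"
proof (rule ccontr)
  assume "\<not> ?thesis"
  then obtain c p1 p2 where c: "c \<in> C" "p1 \<in> comp a b x" "inc p1 c" "p2 \<in> comp a b y" "inc p2 c"
    unfolding CD_def by auto
  have p2: "p2 \<in> P - {a,b}" using comp_sub[OF y(1)] c by auto
  have "p2 \<in> comp a b x"
  proof (cases "p1 = p2")
    case True then show ?thesis using c by simp
  next
    case False
    then have "col p1 p2" using c col_def by auto
    then show ?thesis using comp_closed[OF c(2) x p2] by simp
  qed
  then have "y \<in> comp a b x" using c(4) comp_sym comp_trans by blast
  then show False using y by simp
qed

lemma sc_sum_le: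
  assumes z: "z \<in> P" and dj: "CD D1 \<inter> CD D2 = {}"
  shows "sc D1 z + sc D2 z \<le> r"
proof -
  have "sc D1 z + sc D2 z = card ((cts z \<inter> CD D1) \<union> (cts z \<inter> CD D2))"
    unfolding sc_def by (rule card_Un_disjoint[symmetric]) (use fin_cts dj in auto)
  also have "\<dots> \<le> card (cts z)" by (rule card_mono[OF fin_cts]) auto
  also have "\<dots> = r" using ctsr z cts_def by simp
  finally show ?thesis .
qed

lemma closeup:
  assumes conn: "\<forall>p\<in>P. \<forall>q\<in>P. RP\<^sup>*\<^sup>* p q" and x: "x \<in> P - {a,b}"
    and zz: "z \<in> {a,b}" "z' \<in> {a,b}" "z \<noteq> z'" "z \<in> P"
    and s1: "sc (comp a b x) z' = 0" and s2: "sc (comp a b x) z = r"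
  shows "comp a b x \<union> {z} = P"
proof -
  define D where "D = comp a b x"
  have DP: "D \<subseteq> P - {a,b}" using comp_sub[OF x] D_def by simp
  have z1: "cts z' \<inter> CD D = {}" using sc_zero s1 D_def by auto
  have "cts z \<inter> CD D = cts z"
  proof (rule card_subset_eq[OF fin_cts])
    show "cts z \<inter> CD D \<subseteq> cts z" by auto
    show "card (cts z \<inter> CD D) = card (cts z)" using s2 D_def sc_def ctsr zz cts_def by simp
  qed
  then have ctz: "cts z \<subseteq> CD D" by auto
  show ?thesis unfolding D_def[symmetric]
  proof (rule conn_closed[OF conn RPK])
    show "D \<union> {z} \<subseteq> P" using DP zz by auto
    show "D \<union> {z} \<noteq> {}" by auto
    fix p q assume p: "p \<in> D \<union> {z}" and pq: "RP p q"
    then obtain c where c: "c \<in> C" "inc p c" "inc q c" "q \<in> P" using RP_def col_def by auto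
    have cD: "c \<in> CD D"
    proof (cases "p = z")
      case True then show ?thesis using ctz c cts_def by auto
    next
      case False then show ?thesis using p c CD_def by auto
    qed
    have "q \<in> pts c" using c pts_def by auto
    then have "q \<in> D \<union> {a,b}" using pts_sub[OF x] cD D_def by auto
    moreover have "q \<noteq> z'" using z1 c cD cts_def by auto
    ultimately show "q \<in> D \<union> {z}" using zz by auto
  qed
qed


definition valid where "valid a b \<longleftrightarrow> a \<in> P \<and> b \<in> P \<and> a \<noteq> b \<and> \<not> col a b \<and> (\<exists>\<rho>\<in>P. col \<rho> a \<and> col \<rho> b)"
definition Mab where "Mab a b = Max ((\<lambda>x. card (comp a b x)) ` (P - {a,b}))"

lemma Mab_ge: "x \<in> P - {a,b} \<Longrightarrow> card (comp a b x) \<le> Mab a b"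
  unfolding Mab_def using finP by (intro Max_ge) auto

lemma Mab_attain: "P - {a,b} \<noteq> {} \<Longrightarrow> \<exists>x\<in>P-{a,b}. card (comp a b x) = Mab a b"
proof -
  assume ne: "P - {a,b} \<noteq> {}"
  have "Mab a b \<in> (\<lambda>x. card (comp a b x)) ` (P - {a,b})"
    unfolding Mab_def using finP ne by (intro Max_in) auto
  then show ?thesis by auto
qed

lemma r_ineq: "(r-1)*(r-1) + 1 < r*(r-1)"
proof -
  obtain t where "r = t + 3" using r3 by (metis add.commute le_Suc_ex)
  then show ?thesis by (simp add: algebra_simps)
qed

lemma cardA2:
  assumes "a \<in> P" "D \<subseteq> P"
  shows "card {p\<in>D. col a p} \<le> sc D a * (r-1)"
proof -
  have sub: "{p\<in>D. col a p} \<subseteq> (\<Union>c\<in>cts a \<inter> CD D. pts c - {a})"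
  proof
    fix p assume p: "p \<in> {p\<in>D. col a p}"
    then obtain c where c: "c \<in> C" "inc a c" "inc p c" "p \<noteq> a" using col_def by auto
    have "p \<in> P" using p assms(2) by auto
    then show "p \<in> (\<Union>c\<in>cts a \<inter> CD D. pts c - {a})"
      using c p by (auto simp: cts_def CD_def pts_def)
  qed
  have "card {p\<in>D. col a p} \<le> card (\<Union>c\<in>cts a \<inter> CD D. pts c - {a})"
    by (rule card_mono[OF _ sub]) (use fin_pts fin_cts in auto)
  also have "\<dots> \<le> (\<Sum>c\<in>cts a \<inter> CD D. card (pts c - {a}))"
    by (rule card_UN_le) (use fin_cts in auto)
  also have "\<dots> \<le> (\<Sum>c\<in>cts a \<inter> CD D. r - 1)"
  proof (rule sum_mono)
    fix c assume "c \<in> cts a \<inter> CD D"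
    then show "card (pts c - {a}) \<le> r - 1"
      using ptsr[of c] assms fin_pts by (auto simp: cts_def pts_def card_Diff_singleton)
  qed
  also have "\<dots> = sc D a * (r-1)" by (simp add: sc_def)
  finally show ?thesis .
qed


lemma extremal:
  assumes conn: "\<forall>p\<in>P. \<forall>q\<in>P. RP\<^sup>*\<^sup>* p q"
    and reg: "\<forall>p\<in>P. card (nb p) = r*(r-1)"
    and val: "valid a b"
    and mx: "\<And>a' b'. valid a' b' \<Longrightarrow> Mab a' b' \<le> Mab a b"
  shows "\<forall>x\<in>P-{a,b}. comp a b x = P - {a,b}"
proof (rule ccontr)
  assume nc: "\<not> ?thesis"
  have ab: "a \<in> P" "b \<in> P" "a \<noteq> b" "\<not> col a b" using val valid_def by auto
  obtain \<rho> where \<rho>: "\<rho> \<in> P" "col \<rho> a" "col \<rho> b" using val valid_def by auto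
  have \<rho>P: "\<rho> \<in> P - {a,b}" using \<rho> col_irr by auto
  then obtain x1 where x1: "x1 \<in> P - {a,b}" "card (comp a b x1) = Mab a b"
    using Mab_attain by blast
  obtain x where x: "x \<in> P - {a,b}" "comp a b x \<noteq> P - {a,b}" using nc by auto
  then obtain y where y: "y \<in> P - {a,b}" "y \<notin> comp a b x" using comp_sub[OF x(1)] by blast
  obtain y1 where y1: "y1 \<in> P - {a,b}" "y1 \<notin> comp a b x1"
  proof (cases "comp a b x1 = P - {a,b}")
    case True
    then have "x \<in> comp a b x1" using x by simp
    then have "comp a b x = comp a b x1" by (rule comp_eq)
    then show ?thesis using True y by simp
  next
    case False
    then show ?thesis using that comp_sub[OF x1(1)] by blast
  qed
  define D1 where "D1 = comp a b x1"
  define D2 where "D2 = comp a b y1"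
  have D1P: "D1 \<subseteq> P - {a,b}" using comp_sub[OF x1(1)] D1_def by simp
  have D2P: "D2 \<subseteq> P - {a,b}" using comp_sub[OF y1(1)] D2_def by simp
  have dj: "CD D1 \<inter> CD D2 = {}" using CD_disj[OF x1(1) y1] D1_def D2_def by simp
  have x1D2: "x1 \<notin> D2"
  proof
    assume "x1 \<in> D2" then have "y1 \<in> comp a b x1" using comp_sym D2_def by blast
    then show False using y1 by simp
  qed
  have D12: "D1 \<inter> D2 = {}"
  proof (rule ccontr)
    assume "D1 \<inter> D2 \<noteq> {}"
    then obtain z where "z \<in> comp a b x1" "z \<in> comp a b y1" using D1_def D2_def by auto
    then have "y1 \<in> comp a b x1" using comp_sym comp_trans by blast
    then show False using y1 by simp
  qed
  have g1: "sc D1 a + sc D1 b \<ge> r" using sc_ge_r[OF conn x1(1) ab(1-3)] D1_def by simp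
  have g2: "sc D2 a + sc D2 b \<ge> r" using sc_ge_r[OF conn y1(1) ab(1-3)] D2_def by simp
  have la: "sc D1 a + sc D2 a \<le> r" using sc_sum_le[OF ab(1) dj] .
  have lb: "sc D1 b + sc D2 b \<le> r" using sc_sum_le[OF ab(2) dj] .
  have nsa2: "sc D2 a \<noteq> 0"
  proof
    assume "sc D2 a = 0"
    then have "sc D1 b = 0" "sc D1 a = r" using g1 g2 la lb by auto
    then have "D1 \<union> {a} = P" using closeup[OF conn x1(1), of a b] ab D1_def by auto
    then show False using y1 D1_def by auto
  qed
  have nsa1: "sc D1 a \<noteq> 0"
  proof
    assume "sc D1 a = 0"
    then have "sc D2 b = 0" "sc D2 a = r" using g1 g2 la lb by auto
    then have "D2 \<union> {a} = P" using closeup[OF conn y1(1), of a b] ab D2_def by auto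
    then show False using x1 x1D2 by auto
  qed
  have nsb1: "sc D1 b \<noteq> 0" using g1 la nsa2 by auto
  have sa2le: "sc D2 a \<le> r - 1" using la nsa1 by auto
  define A2 where "A2 = {p\<in>D2. col a p}"
  have A2sub: "A2 \<subseteq> D2" unfolding A2_def by auto
  have cA2: "card A2 \<le> (r-1)*(r-1)"
  proof -
    have "card A2 \<le> sc D2 a * (r-1)" using cardA2[OF ab(1)] D2P A2_def by auto
    also have "\<dots> \<le> (r-1)*(r-1)" using sa2le by (rule mult_le_mono1)
    finally show ?thesis .
  qed
  have fD2: "finite D2" using fin_comp[OF y1(1)] D2_def by simp
  have cD2: "r*(r-1) \<le> card D2 + 1"
  proof -
    have y1D2: "y1 \<in> D2" using comp_self D2_def by simp
    have "nb y1 \<subseteq> (D2 - {y1}) \<union> {a,b}"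
    proof
      fix q assume q: "q \<in> nb y1"
      then have qq: "q \<in> P" "col y1 q" using nb_def by auto
      show "q \<in> (D2 - {y1}) \<union> {a,b}"
      proof (cases "q \<in> {a,b}")
        case True then show ?thesis by blast
      next
        case False
        then have "q \<in> D2" using comp_closed[OF y1D2[unfolded D2_def] y1(1)] qq D2_def by auto
        then show ?thesis using qq col_irr by auto
      qed
    qed
    then have "card (nb y1) \<le> card ((D2 - {y1}) \<union> {a,b})" by (rule card_mono[rotated]) (use fD2 in auto)
    also have "\<dots> \<le> card (D2 - {y1}) + card {a,b}" by (rule card_Un_le)
    also have "\<dots> \<le> (card D2 - 1) + 2"
    proof -
      have "card {a,b} \<le> 2" by (cases "a = b") auto
      then show ?thesis using fD2 y1D2 by simp
    qed
    finally have "card (nb y1) \<le> card D2 - 1 + 2" .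
    moreover have "card (nb y1) = r*(r-1)" using reg y1 by auto
    moreover have "card D2 \<ge> 1" using y1D2 fD2 by (metis One_nat_def card_gt_0_iff empty_iff Suc_leI)
    ultimately show ?thesis by linarith
  qed
  have "card A2 < card D2" using cA2 cD2 r_ineq by linarith
  then have "\<not> D2 \<subseteq> A2" using card_mono[of A2 D2] fD2 A2sub finite_subset by (metis not_le)
  then obtain bx where bx: "bx \<in> D2" "bx \<notin> A2" by blast
  obtain c0 where c0: "c0 \<in> cts a \<inter> CD D2" using nsa2 sc_def by (metis card.empty ex_in_conv)
  then obtain q0 where q0: "q0 \<in> D2" "inc q0 c0" "inc a c0" "c0 \<in> C" unfolding CD_def cts_def by auto
  have q0A: "q0 \<in> A2" using q0 D2P col_def A2_def by auto
  have cq0: "comp a b q0 = D2" using comp_eq q0(1) D2_def by simp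
  have "bx \<in> comp a b q0" using cq0 bx by simp
  then have "(Rab a b)\<^sup>*\<^sup>* q0 bx" unfolding comp_def by simp
  then have "bx \<in> A2 \<or> (\<exists>q\<in>A2. \<exists>bs\<in>D2 - A2. col q bs)"
  proof (induction rule: rtranclp_induct)
    case base then show ?case using q0A by simp
  next
    case (step u v)
    have "(Rab a b)\<^sup>*\<^sup>* q0 v" using step(1,2) by simp
    then have "v \<in> D2" using cq0 unfolding comp_def by blast
    then show ?case using step Rab_def by blast
  qed
  then obtain q bs where qbs: "q \<in> A2" "bs \<in> D2" "bs \<notin> A2" "col q bs" using bx by blast
  have bsP: "bs \<in> P - {a,b}" using qbs D2P by auto
  have bsD1: "bs \<notin> D1" using qbs D12 by auto
  have valb: "valid a bs"
    unfolding valid_def using ab bsP qbs A2_def D2P col_sym by auto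
  have sub1: "D1 \<subseteq> comp a bs x1"
  proof
    fix z assume "z \<in> D1"
    then have "(Rab a b)\<^sup>*\<^sup>* x1 z" unfolding D1_def comp_def by simp
    then show "z \<in> comp a bs x1"
    proof (induction rule: rtranclp_induct)
      case base then show ?case by (rule comp_self)
    next
      case (step u v)
      have "u \<in> D1" "v \<in> D1" using step(1,2) unfolding D1_def comp_def by auto
      then have "Rab a bs u v" using step(2) bsD1 unfolding Rab_def by auto
      then show ?case using step(3) unfolding comp_def by simp
    qed
  qed
  obtain c1 where c1: "c1 \<in> cts b \<inter> CD D1" using nsb1 sc_def by (metis card.empty ex_in_conv)
  then obtain p1 where p1: "p1 \<in> D1" "inc p1 c1" "inc b c1" "c1 \<in> C" unfolding CD_def cts_def by auto
  have "Rab a bs p1 b" unfolding Rab_def using p1 D1P bsD1 ab bsP col_def by auto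
  moreover have "(Rab a bs)\<^sup>*\<^sup>* x1 p1" using sub1 p1(1) unfolding comp_def by blast
  ultimately have bin: "b \<in> comp a bs x1" unfolding comp_def by (simp add: rtranclp.rtrancl_into_rtrancl)
  have bD1: "b \<notin> D1" using D1P by auto
  have x1bs: "x1 \<in> P - {a,bs}" using x1 bsD1 comp_self D1_def by auto
  have fc: "finite (comp a bs x1)" using fin_comp[OF x1bs] .
  have "card (D1 \<union> {b}) \<le> card (comp a bs x1)" using sub1 bin fc by (intro card_mono) auto
  moreover have "card (D1 \<union> {b}) = card D1 + 1" using bD1 fin_comp[OF x1(1)] D1_def by simp
  moreover have "card (comp a bs x1) \<le> Mab a bs" by (rule Mab_ge[OF x1bs])
  moreover have "Mab a bs \<le> Mab a b" by (rule mx[OF valb])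
  ultimately show False using x1(2) D1_def by simp
qed


lemma extend_one:
  assumes w: "w \<in> P" and f1: "\<forall>x\<in>P-{w}. f x < r*(r-1)"
    and f2: "\<forall>x\<in>P-{w}. \<forall>y\<in>P-{w}. col x y \<longrightarrow> f x \<noteq> f y"
    and cw: "card (f ` nb w) < r*(r-1)"
  shows "\<exists>T\<subseteq>P. (\<forall>x\<in>T. \<forall>y\<in>T. \<not> col x y) \<and> card P \<le> r*(r-1)*card T"
proof -
  let ?D = "r*(r-1)"
  obtain c where c: "c < ?D" "c \<notin> f ` nb w" using free_color[OF finite_imageI[OF fin_nb] cw] by blast
  define g where "g = f(w := c)"
  have g1: "\<forall>x\<in>P. g x < ?D" using f1 c g_def by auto
  have g2: "\<forall>x\<in>P. \<forall>y\<in>P. col x y \<longrightarrow> g x \<noteq> g y"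
  proof (intro ballI impI)
    fix x y assume xy: "x \<in> P" "y \<in> P" "col x y"
    show "g x \<noteq> g y"
    proof (cases "x = w")
      case True
      then have "y \<noteq> w" "y \<in> nb w" using xy col_irr nb_def by auto
      then show ?thesis using True c g_def by auto
    next
      case False
      show ?thesis
      proof (cases "y = w")
        case True
        then have "x \<in> nb w" using xy col_sym nb_def by auto
        then show ?thesis using True False c g_def by auto
      next
        case False
        then show ?thesis using f2 xy \<open>x \<noteq> w\<close> g_def by auto
      qed
    qed
  qed
  have Dpos: "?D > 0" using r3 by simp
  obtain i where i: "i < ?D" "card P \<le> ?D * card {x\<in>P. g x = i}"
    using pigeon_class[OF finP g1 Dpos] by blast
  show ?thesis
  proof (rule exI[of _ "{x\<in>P. g x = i}"], intro conjI)
    show "\<forall>x\<in>{x\<in>P. g x = i}. \<forall>y\<in>{x\<in>P. g x = i}. \<not> col x y" using g2 by blast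
  qed (use i in auto)
qed

lemma exists_valid:
  assumes conn: "\<forall>p\<in>P. \<forall>q\<in>P. RP\<^sup>*\<^sup>* p q"
    and nc: "p \<in> P" "q \<in> P" "p \<noteq> q" "\<not> col p q"
  shows "\<exists>a b. valid a b"
proof (rule ccontr)
  assume H: "\<not> ?thesis"
  have "RP\<^sup>*\<^sup>* p q" using conn nc by auto
  then have "q = p \<or> col p q"
  proof (induction rule: rtranclp_induct)
    case base then show ?case by simp
  next
    case (step y z)
    have yz: "y \<in> P" "z \<in> P" "col y z" using step(2) RP_def by auto
    show ?case
    proof (cases "y = p")
      case True then show ?thesis using yz by simp
    next
      case False
      then have cpy: "col p y" using step(3) by simp
      show ?thesis
      proof (cases "z = p")
        case True then show ?thesis by simp
      next
        case False
        have "\<not> valid p z" using H by blast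
        then show ?thesis using nc(1) yz cpy col_sym False unfolding valid_def by blast
      qed
    qed
  qed
  then show False using nc by auto
qed

theorem CL:
  assumes conn: "\<forall>p\<in>P. \<forall>q\<in>P. RP\<^sup>*\<^sup>* p q"
  shows "(\<exists>T\<subseteq>P. (\<forall>x\<in>T. \<forall>y\<in>T. \<not> col x y) \<and> card P \<le> r*(r-1)*card T)
         \<or> (\<forall>p\<in>P. \<forall>q\<in>P. p \<noteq> q \<longrightarrow> col p q)"
proof (cases "\<exists>d\<in>P. card (nb d) < r*(r-1)")
  case True
  then show ?thesis using caseA[OF conn] by blast
next
  case False
  then have reg: "\<forall>p\<in>P. card (nb p) = r*(r-1)" using deg_le le_neq_implies_less by blast
  show ?thesis
  proof (cases "\<forall>p\<in>P. \<forall>q\<in>P. p \<noteq> q \<longrightarrow> col p q")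
    case True then show ?thesis by simp
  next
    case False
    then obtain p q where pq: "p \<in> P" "q \<in> P" "p \<noteq> q" "\<not> col p q" by blast
    define VP where "VP = {(a,b). valid a b}"
    have fVP: "finite VP"
    proof (rule finite_subset[of _ "P \<times> P"])
      show "VP \<subseteq> P \<times> P" unfolding VP_def valid_def by auto
    qed (use finP in simp)
    have neVP: "VP \<noteq> {}" using exists_valid[OF conn pq] VP_def by auto
    define m where "m = Max ((\<lambda>(a,b). Mab a b) ` VP)"
    have "m \<in> (\<lambda>(a,b). Mab a b) ` VP" unfolding m_def using fVP neVP by (intro Max_in) auto
    then obtain a b where abV: "(a,b) \<in> VP" "Mab a b = m" by auto
    have val: "valid a b" using abV VP_def by simp
    have mx: "\<And>a' b'. valid a' b' \<Longrightarrow> Mab a' b' \<le> Mab a b"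
    proof -
      fix a' b' assume "valid a' b'"
      then have "(a',b') \<in> VP" using VP_def by simp
      then have "Mab a' b' \<le> m" unfolding m_def using fVP by (intro Max_ge) force+
      then show "Mab a' b' \<le> Mab a b" using abV by simp
    qed
    have full: "\<forall>x\<in>P-{a,b}. comp a b x = P - {a,b}" by (rule extremal[OF conn reg val mx])
    have ab: "a \<in> P" "b \<in> P" "a \<noteq> b" "\<not> col a b" using val valid_def by auto
    obtain \<rho> where \<rho>: "\<rho> \<in> P" "col \<rho> a" "col \<rho> b" using val valid_def by auto
    have \<rho>K: "\<rho> \<in> P - {a,b}" using \<rho> col_irr by auto
    let ?K = "P - {a,b}"
    let ?D = "r*(r-1)"
    have connK: "\<forall>u\<in>?K. \<forall>v\<in>?K. (Rab a b)\<^sup>*\<^sup>* u v" using full comp_def by blast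
    have RabK: "\<And>u v. Rab a b u v \<Longrightarrow> u\<in>?K \<and> v\<in>?K" unfolding Rab_def by auto
    have c1: "\<And>U. U \<subseteq> ?K \<Longrightarrow> U \<noteq> {} \<Longrightarrow> U \<noteq> ?K \<Longrightarrow> \<exists>u\<in>U. \<exists>y\<in>?K-U. RP u y"
    proof -
      fix U assume "U \<subseteq> ?K" "U \<noteq> {}" "U \<noteq> ?K"
      then obtain u y where "u \<in> U" "y \<in> ?K - U" "Rab a b u y" using conn_leave[OF connK RabK] by blast
      then show "\<exists>u\<in>U. \<exists>y\<in>?K-U. RP u y" unfolding Rab_def RP_def by blast
    qed
    have nbeq: "\<And>u. u \<in> P \<Longrightarrow> {v. RP u v} = nb u" unfolding RP_def nb_def by auto
    have c2: "\<And>u. u \<in> ?K \<Longrightarrow> finite {v. RP u v} \<and> card {v. RP u v} \<le> ?D"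
      using nbeq deg_le fin_nb by simp
    have c3: "\<And>u v. RP u v \<Longrightarrow> RP v u" unfolding RP_def using col_sym by blast
    have c4: "\<And>u. \<not> RP u u" unfolding RP_def using col_irr by blast
    have c5: "{a,b} \<inter> ?K = {}" by auto
    have c6: "\<forall>x\<in>{a,b}. (\<lambda>_. 0::nat) x < ?D" using r3 by simp
    have c7: "\<forall>x\<in>{a,b}. \<forall>y\<in>{a,b}. RP x y \<longrightarrow> (\<lambda>_. 0::nat) x \<noteq> (\<lambda>_. 0) y"
      using ab col_sym col_irr unfolding RP_def by blast
    have c8: "?K - {\<rho>} \<subseteq> ?K" "?K - {\<rho>} \<noteq> ?K" using \<rho>K by auto
    obtain f where f1: "\<forall>x\<in>{a,b}. f x = 0" and f2: "\<forall>x\<in>{a,b}\<union>(?K-{\<rho>}). f x < ?D"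
      and f3: "\<forall>x\<in>{a,b}\<union>(?K-{\<rho>}). \<forall>y\<in>{a,b}\<union>(?K-{\<rho>}). RP x y \<longrightarrow> f x \<noteq> f y"
      using greedy_col[of ?K RP ?D "{a,b}" "\<lambda>_. 0", OF _ c1 c2 c3 c4 c5 c6 c7 c8] finP by auto
    have PK: "{a,b} \<union> (?K-{\<rho>}) = P - {\<rho>}" using ab \<rho>K by auto
    have g1: "\<forall>x\<in>P-{\<rho>}. f x < ?D" using f2 unfolding PK .
    have g2: "\<forall>x\<in>P-{\<rho>}. \<forall>y\<in>P-{\<rho>}. col x y \<longrightarrow> f x \<noteq> f y" using f3 unfolding PK RP_def by blast
    have aN: "a \<in> nb \<rho> - {b}" "b \<in> nb \<rho>" using \<rho> ab nb_def by auto
    have feq: "f ` nb \<rho> = f ` (nb \<rho> - {b})"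
    proof
      show "f ` nb \<rho> \<subseteq> f ` (nb \<rho> - {b})"
      proof
        fix z assume "z \<in> f ` nb \<rho>"
        then obtain v where v: "v \<in> nb \<rho>" "z = f v" by auto
        show "z \<in> f ` (nb \<rho> - {b})"
        proof (cases "v = b")
          case True
          then have "z = f a" using v f1 by simp
          then show ?thesis using aN by auto
        next
          case False then show ?thesis using v by auto
        qed
      qed
    qed auto
    have "card (f ` (nb \<rho> - {b})) \<le> card (nb \<rho> - {b})" by (rule card_image_le) (use fin_nb in simp)
    moreover have "card (nb \<rho> - {b}) = ?D - 1" using reg \<rho> aN fin_nb by simp
    moreover have "?D > 0" using r3 by simp
    ultimately have "card (f ` (nb \<rho> - {b})) < ?D" by linarith
    then have cw: "card (f ` nb \<rho>) < ?D" unfolding feq .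
    show ?thesis using extend_one[OF \<rho>(1) g1 g2 cw] by blast
  qed
qed

end


context incs begin

lemma card_PC: "card P = card C"
proof -
  have "r * card P = (\<Sum>p\<in>P. card {c\<in>C. inc p c})"
  proof -
    have "(\<Sum>p\<in>P. card {c\<in>C. inc p c}) = (\<Sum>p\<in>P. r)" using ctsr by (intro sum.cong) auto
    then show ?thesis by simp
  qed
  also have "\<dots> = (\<Sum>p\<in>P. \<Sum>c\<in>C. if inc p c then 1 else 0)"
    using card_filter[OF finC] by simp
  also have "\<dots> = (\<Sum>c\<in>C. \<Sum>p\<in>P. if inc p c then 1 else 0)" by (rule sum.swap)
  also have "\<dots> = (\<Sum>c\<in>C. card {p\<in>P. inc p c})" using card_filter[OF finP] by simp
  also have "\<dots> = (\<Sum>c\<in>C. r)" using ptsr by (intro sum.cong) auto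
  also have "\<dots> = r * card C" by simp
  finally show ?thesis using r3 by simp
qed

lemma r_ineq2: "(r-1)*(r-1) + (r-2) < r*(r-1)"
proof -
  obtain t where "r = t + 3" using r3 by (metis add.commute le_Suc_ex)
  then show ?thesis by (simp add: algebra_simps)
qed

lemma c4free:
  assumes p: "p \<in> P" and dg: "card (nb p) = r*(r-1)"
    and c: "c1 \<in> cts p" "c2 \<in> cts p" "c1 \<noteq> c2" and q: "q \<in> pts c1" "q \<in> pts c2"
  shows "q = p"
proof (rule ccontr)
  assume qp: "q \<noteq> p"
  have sub: "nb p \<subseteq> (\<Union>c\<in>cts p - {c2}. pts c - {p}) \<union> (pts c2 - {p,q})"
  proof
    fix x assume "x \<in> nb p"
    then obtain c where cc: "c \<in> C" "inc p c" "inc x c" "x \<noteq> p" "x \<in> P" unfolding nb_def col_def by auto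
    show "x \<in> (\<Union>c\<in>cts p - {c2}. pts c - {p}) \<union> (pts c2 - {p,q})"
    proof (cases "c = c2")
      case False then show ?thesis using cc by (auto simp: cts_def pts_def)
    next
      case True
      show ?thesis
      proof (cases "x = q")
        case True then show ?thesis using q c qp by (auto simp: cts_def pts_def)
      next
        case False then show ?thesis using cc \<open>c = c2\<close> by (auto simp: cts_def pts_def)
      qed
    qed
  qed
  have "card (nb p) \<le> card ((\<Union>c\<in>cts p - {c2}. pts c - {p}) \<union> (pts c2 - {p,q}))"
    by (rule card_mono[OF _ sub]) (use fin_pts fin_cts in auto)
  also have "\<dots> \<le> card (\<Union>c\<in>cts p - {c2}. pts c - {p}) + card (pts c2 - {p,q})" by (rule card_Un_le)
  also have "card (\<Union>c\<in>cts p - {c2}. pts c - {p}) \<le> (\<Sum>c\<in>cts p - {c2}. card (pts c - {p}))"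
    by (rule card_UN_le) (use fin_cts in auto)
  also have "\<dots> \<le> (\<Sum>c\<in>cts p - {c2}. r - 1)"
  proof (rule sum_mono)
    fix c assume "c \<in> cts p - {c2}"
    then show "card (pts c - {p}) \<le> r - 1"
      using ptsr[of c] p fin_pts by (auto simp: cts_def pts_def card_Diff_singleton)
  qed
  also have "\<dots> = (r-1)*(r-1)"
  proof -
    have "card (cts p - {c2}) = r - 1" using ctsr[OF p] c(2) fin_cts by (simp add: cts_def)
    then show ?thesis by simp
  qed
  also have "card (pts c2 - {p,q}) = r - 2"
  proof -
    have c2C: "c2 \<in> C" using c cts_def by auto
    have "p \<in> pts c2" using c p by (auto simp: cts_def pts_def)
    then have "{p,q} \<subseteq> pts c2" using q by auto
    then have "card (pts c2 - {p,q}) = card (pts c2) - card {p,q}" by (rule card_Diff_subset[rotated]) simp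
    then show ?thesis using ptsr[OF c2C] qp pts_def by simp
  qed
  finally show False using dg r_ineq2 by linarith
qed

definition dnb where "dnb c = {c'\<in>C. c' \<noteq> c \<and> (\<exists>p\<in>P. inc p c \<and> inc p c')}"

lemma dual_deg:
  assumes reg: "\<forall>p\<in>P. card (nb p) = r*(r-1)" and c: "c \<in> C"
  shows "card (dnb c) = r*(r-1)"
proof -
  have eq: "dnb c = (\<Union>p\<in>pts c. cts p - {c})" unfolding dnb_def pts_def cts_def by auto
  have "card (\<Union>p\<in>pts c. cts p - {c}) = (\<Sum>p\<in>pts c. card (cts p - {c}))"
  proof (rule card_UN_disjoint)
    show "finite (pts c)" by (rule fin_pts)
    show "\<forall>i\<in>pts c. finite (cts i - {c})" using fin_cts by auto
    show "\<forall>i\<in>pts c. \<forall>j\<in>pts c. i \<noteq> j \<longrightarrow> (cts i - {c}) \<inter> (cts j - {c}) = {}"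
    proof (intro ballI impI)
      fix i j assume ij: "i \<in> pts c" "j \<in> pts c" "i \<noteq> j"
      show "(cts i - {c}) \<inter> (cts j - {c}) = {}"
      proof (rule ccontr)
        assume "(cts i - {c}) \<inter> (cts j - {c}) \<noteq> {}"
        then obtain c' where c': "c' \<in> cts i" "c' \<in> cts j" "c' \<noteq> c" by auto
        have iP: "i \<in> P" using ij pts_def by auto
        have "c \<in> cts i" using ij c by (auto simp: pts_def cts_def)
        moreover have "j \<in> pts c" "j \<in> pts c'" using ij c' by (auto simp: pts_def cts_def)
        ultimately have "j = i" using c4free[OF iP _ _ c'(1) c'(3)[symmetric]] reg iP by blast
        then show False using ij by simp
      qed
    qed
  qed
  also have "\<dots> = (\<Sum>p\<in>pts c. r - 1)"
  proof (rule sum.cong)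
    fix p assume p: "p \<in> pts c"
    then have "c \<in> cts p" "p \<in> P" using c by (auto simp: pts_def cts_def)
    then show "card (cts p - {c}) = r - 1" using ctsr fin_cts by (simp add: cts_def)
  qed simp
  also have "\<dots> = r*(r-1)" using ptsr[OF c] by (simp add: pts_def)
  finally show ?thesis using eq by simp
qed

lemma complete_struct:
  assumes comp: "\<forall>p\<in>P. \<forall>q\<in>P. p \<noteq> q \<longrightarrow> col p q" and cP: "card P = r*(r-1)+1"
  shows "card C = r*(r-1)+1"
    and "\<forall>p1\<in>P. \<forall>p2\<in>P. p1 \<noteq> p2 \<longrightarrow> (\<exists>!c. c \<in> C \<and> inc p1 c \<and> inc p2 c)"
    and "\<forall>c1\<in>C. \<forall>c2\<in>C. c1 \<noteq> c2 \<longrightarrow> (\<exists>!p. p \<in> P \<and> inc p c1 \<and> inc p c2)"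
proof -
  have nbe: "\<And>p. p \<in> P \<Longrightarrow> nb p = P - {p}" using comp col_irr unfolding nb_def by auto
  have reg: "\<forall>p\<in>P. card (nb p) = r*(r-1)" using nbe cP finP by simp
  show cC: "card C = r*(r-1)+1" using card_PC cP by simp
  show "\<forall>p1\<in>P. \<forall>p2\<in>P. p1 \<noteq> p2 \<longrightarrow> (\<exists>!c. c \<in> C \<and> inc p1 c \<and> inc p2 c)"
  proof (intro ballI impI)
    fix p1 p2 assume pp: "p1 \<in> P" "p2 \<in> P" "p1 \<noteq> p2"
    then obtain c where c: "c \<in> C" "inc p1 c" "inc p2 c" using comp col_def by blast
    show "\<exists>!c. c \<in> C \<and> inc p1 c \<and> inc p2 c"
    proof (rule ex1I[of _ c])
      show "c \<in> C \<and> inc p1 c \<and> inc p2 c" using c by simp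
      fix c' assume c': "c' \<in> C \<and> inc p1 c' \<and> inc p2 c'"
      show "c' = c"
      proof (rule ccontr)
        assume "c' \<noteq> c"
        then have "p2 = p1" using c4free[OF pp(1), of c' c p2] reg pp c c' by (auto simp: cts_def pts_def)
        then show False using pp by simp
      qed
    qed
  qed
  show "\<forall>c1\<in>C. \<forall>c2\<in>C. c1 \<noteq> c2 \<longrightarrow> (\<exists>!p. p \<in> P \<and> inc p c1 \<and> inc p c2)"
  proof (intro ballI impI)
    fix c1 c2 assume cc: "c1 \<in> C" "c2 \<in> C" "c1 \<noteq> c2"
    have "card (dnb c1) = card C - 1" using dual_deg[OF reg cc(1)] cC by simp
    moreover have "dnb c1 \<subseteq> C - {c1}" unfolding dnb_def by auto
    ultimately have "dnb c1 = C - {c1}"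
      by (metis card_Diff_singleton card_subset_eq cc(1) finC finite_Diff)
    then have "c2 \<in> dnb c1" using cc by auto
    then obtain p where p: "p \<in> P" "inc p c1" "inc p c2" unfolding dnb_def by auto
    show "\<exists>!p. p \<in> P \<and> inc p c1 \<and> inc p c2"
    proof (rule ex1I[of _ p])
      show "p \<in> P \<and> inc p c1 \<and> inc p c2" using p by simp
      fix p' assume p': "p' \<in> P \<and> inc p' c1 \<and> inc p' c2"
      show "p' = p" using c4free[OF p(1), of c1 c2 p'] reg p p' cc by (auto simp: cts_def pts_def)
    qed
  qed
qed

end


lemma rot_const:
  fixes ys :: "'a list"
  assumes p: "prime p" and l: "length ys = p" and k: "0 < k" "k < p" and rk: "rotate k ys = ys"
  shows "i < p \<Longrightarrow> ys ! i = ys ! 0"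
proof -
  have p0: "p > 0" using k by simp
  have step: "ys ! i = ys ! ((k + i) mod p)" if "i < p" for i
    using nth_rotate[of i ys k] that l rk by simp
  have jk: "ys ! ((j*k) mod p) = ys ! 0" for j
  proof (induction j)
    case 0 then show ?case by simp
  next
    case (Suc j)
    have "(Suc j * k) mod p = (k + (j*k) mod p) mod p" by (simp add: mod_add_right_eq)
    then have "ys ! ((Suc j * k) mod p) = ys ! ((j*k) mod p)"
      using step[of "(j*k) mod p"] p0 by simp
    then show ?case using Suc by simp
  qed
  have "\<not> p dvd k" using k by (simp add: nat_dvd_not_less)
  then have "coprime p k" using p by (rule prime_imp_coprime[rotated])
  then have "coprime k p" by (simp add: coprime_commute)
  then obtain x where x: "[k * x = Suc 0] (mod p)" using cong_solve_coprime_nat by blast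
  assume i: "i < p"
  have "[k * x * i = Suc 0 * i] (mod p)" using x by (rule cong_mult) simp
  then have "((x*i) * k) mod p = i mod p" unfolding cong_def by (simp add: ac_simps)
  then have "((x*i) * k) mod p = i" using i by simp
  then show ?thesis using jk[of "x*i"] by simp
qed


definition orb :: "'a list \<Rightarrow> 'a list set" where "orb ys = {rotate k ys | k. True}"

lemma orb_self: "ys \<in> orb ys" unfolding orb_def by (auto intro: exI[of _ 0])

lemma orb_sub:
  assumes w: "w \<in> orb ys" shows "orb w \<subseteq> orb ys"
proof
  fix z assume "z \<in> orb w"
  then obtain j where j: "z = rotate j w" unfolding orb_def by auto
  obtain k where k: "w = rotate k ys" using w unfolding orb_def by auto
  have "z = rotate (j + k) ys" using j k by (simp add: rotate_rotate)
  then show "z \<in> orb ys" unfolding orb_def by auto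
qed

lemma orb_back:
  assumes w: "w \<in> orb ys" shows "ys \<in> orb w"
proof (cases "ys = []")
  case True
  then have "w = []" using w by (auto simp: orb_def)
  then show ?thesis using orb_self True by simp
next
  case False
  define n where "n = length ys"
  have n0: "n > 0" using False n_def by simp
  obtain k where k: "w = rotate k ys" using w unfolding orb_def by auto
  have "(n - k mod n + k) mod n = 0"
  proof -
    have "k mod n < n" using n0 by simp
    have "n - k mod n + k = n + (k div n) * n" using \<open>k mod n < n\<close> div_mult_mod_eq[of k n] by linarith
    then show ?thesis by simp
  qed
  then have "rotate (n - k mod n) w = ys" using k n_def by (simp add: rotate_rotate)
  then show ?thesis unfolding orb_def by (auto intro: exI[of _ "n - k mod n"])
qed

lemma orb_eq: "w \<in> orb ys \<Longrightarrow> orb w = orb ys"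
proof -
  assume w: "w \<in> orb ys"
  show ?thesis using orb_sub[OF w] orb_sub[OF orb_back[OF w]] by (rule subset_antisym)
qed

lemma orb_img: "length ys = p \<Longrightarrow> p > 0 \<Longrightarrow> orb ys = (\<lambda>k. rotate k ys) ` {0..<p}"
proof -
  assume l: "length ys = p" and p: "p > 0"
  show ?thesis
  proof
    show "orb ys \<subseteq> (\<lambda>k. rotate k ys) ` {0..<p}"
    proof
      fix z assume "z \<in> orb ys"
      then obtain k where "z = rotate k ys" unfolding orb_def by auto
      then have "z = rotate (k mod p) ys" using rotate_conv_mod[of k ys] l by simp
      then show "z \<in> (\<lambda>k. rotate k ys) ` {0..<p}" using p by auto
    qed
  qed (auto simp: orb_def)
qed

lemma rot_dvd:
  assumes p: "prime p" and fS: "finite S"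
    and clo: "\<And>ys. ys \<in> S \<Longrightarrow> length ys = p \<and> rotate1 ys \<in> S"
    and nc: "\<And>ys. ys \<in> S \<Longrightarrow> \<not> (\<forall>i<p. ys ! i = ys ! 0)"
  shows "p dvd card S"
proof -
  have p0: "p > 0" using p by (rule prime_gt_0_nat)
  have cloK: "rotate k ys \<in> S" if "ys \<in> S" for ys k
  proof (induction k)
    case 0 then show ?case using that by simp
  next
    case (Suc k) then show ?case using clo by (simp add: rotate_Suc)
  qed
  have orbS: "orb ys \<subseteq> S" if "ys \<in> S" for ys using cloK that unfolding orb_def by auto
  have cardO: "card (orb ys) = p" if ys: "ys \<in> S" for ys
  proof -
    have l: "length ys = p" using clo ys by auto
    have "inj_on (\<lambda>k. rotate k ys) {0..<p}"
    proof (rule inj_onI)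
      fix k1 k2 assume k: "k1 \<in> {0..<p}" "k2 \<in> {0..<p}" and e: "rotate k1 ys = rotate k2 ys"
      show "k1 = k2"
      proof (rule ccontr)
        assume ne: "k1 \<noteq> k2"
        have gen: "\<And>a b. a < b \<Longrightarrow> b < p \<Longrightarrow> rotate a ys = rotate b ys \<Longrightarrow> False"
        proof -
          fix a b assume ab: "a < b" "b < p" "rotate a ys = rotate b ys"
          have "rotate (p - b) (rotate b ys) = ys" using l ab by (simp add: rotate_rotate)
          moreover have "rotate (p - b) (rotate a ys) = rotate (p - b + a) ys" by (simp add: rotate_rotate)
          ultimately have rr: "rotate (p - b + a) ys = ys" using ab by simp
          have d1: "0 < p - b + a" and d2: "p - b + a < p" using ab by auto
          have "\<forall>i<p. ys ! i = ys ! 0"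
            using rot_const[OF p l d1 d2 rr] by blast
          then show False using nc ys by blast
        qed
        show False
        proof (cases "k1 < k2")
          case True then show False using gen[of k1 k2] k e by auto
        next
          case False then show False using gen[of k2 k1] k e ne by auto
        qed
      qed
    qed
    then show ?thesis using orb_img[OF l p0] by (simp add: card_image)
  qed
  have U: "\<Union>(orb ` S) = S"
  proof
    show "\<Union>(orb ` S) \<subseteq> S" using orbS by auto
    show "S \<subseteq> \<Union>(orb ` S)" using orb_self by auto
  qed
  have "p dvd card (\<Union>(orb ` S))"
  proof (rule dvd_partition)
    show "finite (\<Union>(orb ` S))" using U fS by simp
    show "\<forall>c\<in>orb ` S. p dvd card c" using cardO by auto
    show "\<forall>c1\<in>orb ` S. \<forall>c2\<in>orb ` S. c1 \<noteq> c2 \<longrightarrow> c1 \<inter> c2 = {}"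
    proof (intro ballI impI)
      fix c1 c2 assume c: "c1 \<in> orb ` S" "c2 \<in> orb ` S" "c1 \<noteq> c2"
      then obtain y1 y2 where y: "c1 = orb y1" "c2 = orb y2" by auto
      show "c1 \<inter> c2 = {}"
      proof (rule ccontr)
        assume "c1 \<inter> c2 \<noteq> {}"
        then obtain w where "w \<in> orb y1" "w \<in> orb y2" using y by auto
        then have "orb y1 = orb y2" using orb_eq[of w y1] orb_eq[of w y2] by simp
        then show False using c y by simp
      qed
    qed
  qed
  then show ?thesis using U by simp
qed


definition Wl :: "'a set \<Rightarrow> ('a \<Rightarrow> 'a \<Rightarrow> bool) \<Rightarrow> nat \<Rightarrow> 'a \<Rightarrow> 'a \<Rightarrow> 'a list set" where
  "Wl V E k v u = {xs. length xs = k \<and> set xs \<subseteq> V \<and> successively E (v # xs) \<and> last (v # xs) = u}"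

lemma succ_snoc: "successively E (v # ys @ [u]) \<longleftrightarrow> successively E (v # ys) \<and> E (last (v # ys)) u"
  using successively_append_iff[of E "v # ys" "[u]"] by simp

lemma Wl_fin: "finite V \<Longrightarrow> finite (Wl V E k v u)"
  by (rule finite_subset[of _ "{xs. set xs \<subseteq> V \<and> length xs = k}"])
     (auto simp: Wl_def intro: finite_lists_length_eq)

lemma Wl_0: "Wl V E 0 v u = (if u = v then {[]} else {})" unfolding Wl_def by auto

lemma Wl_Suc_set:
  assumes u: "u \<in> V" and v: "v \<in> V"
  shows "Wl V E (Suc k) v u = (\<Union>w\<in>{w\<in>V. E w u}. (\<lambda>xs. xs @ [u]) ` Wl V E k v w)"
proof
  show "Wl V E (Suc k) v u \<subseteq> (\<Union>w\<in>{w\<in>V. E w u}. (\<lambda>xs. xs @ [u]) ` Wl V E k v w)"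
  proof
    fix xs assume xs: "xs \<in> Wl V E (Suc k) v u"
    then have ne: "xs \<noteq> []" unfolding Wl_def by auto
    define ys where "ys = butlast xs"
    have lx: "last xs = u" using xs ne unfolding Wl_def by auto
    have xe: "xs = ys @ [u]" using append_butlast_last_id[OF ne] lx ys_def by simp
    define w where "w = last (v # ys)"
    have sc: "successively E (v # ys) \<and> E w u" using xs xe succ_snoc[of E v ys u] unfolding Wl_def w_def by auto
    have wV: "w \<in> V"
    proof (cases "ys = []")
      case True then show ?thesis using v w_def by simp
    next
      case False
      then have "w \<in> set ys" using w_def by simp
      then show ?thesis using xs xe unfolding Wl_def by auto
    qed
    have "ys \<in> Wl V E k v w" using xs xe sc w_def unfolding Wl_def by auto
    then show "xs \<in> (\<Union>w\<in>{w\<in>V. E w u}. (\<lambda>xs. xs @ [u]) ` Wl V E k v w)" using wV sc xe by auto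
  qed
  show "(\<Union>w\<in>{w\<in>V. E w u}. (\<lambda>xs. xs @ [u]) ` Wl V E k v w) \<subseteq> Wl V E (Suc k) v u"
  proof
    fix xs assume "xs \<in> (\<Union>w\<in>{w\<in>V. E w u}. (\<lambda>xs. xs @ [u]) ` Wl V E k v w)"
    then obtain w ys where w: "w \<in> V" "E w u" and ys: "ys \<in> Wl V E k v w" and xe: "xs = ys @ [u]" by auto
    show "xs \<in> Wl V E (Suc k) v u"
      using ys w u xe succ_snoc[of E v ys u] unfolding Wl_def by auto
  qed
qed

lemma Wl_Suc:
  assumes fin: "finite V" and u: "u \<in> V" and v: "v \<in> V"
  shows "card (Wl V E (Suc k) v u) = (\<Sum>w\<in>{w\<in>V. E w u}. card (Wl V E k v w))"
proof -
  have "card (\<Union>w\<in>{w\<in>V. E w u}. (\<lambda>xs. xs @ [u]) ` Wl V E k v w)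
      = (\<Sum>w\<in>{w\<in>V. E w u}. card ((\<lambda>xs. xs @ [u]) ` Wl V E k v w))"
  proof (rule card_UN_disjoint)
    show "finite {w\<in>V. E w u}" using fin by simp
    show "\<forall>i\<in>{w\<in>V. E w u}. finite ((\<lambda>xs. xs @ [u]) ` Wl V E k v i)" using Wl_fin[OF fin] by auto
    show "\<forall>i\<in>{w\<in>V. E w u}. \<forall>j\<in>{w\<in>V. E w u}. i \<noteq> j \<longrightarrow>
        (\<lambda>xs. xs @ [u]) ` Wl V E k v i \<inter> (\<lambda>xs. xs @ [u]) ` Wl V E k v j = {}"
      unfolding Wl_def by auto
  qed
  moreover have "card ((\<lambda>xs. xs @ [u]) ` Wl V E k v w) = card (Wl V E k v w)" for w
    by (rule card_image) (auto simp: inj_on_def)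
  ultimately show ?thesis using Wl_Suc_set[OF u v] by simp
qed


lemma friendship_regular:
  fixes V :: "'a set"
  assumes fin: "finite V" and inV: "\<forall>u v. E u v \<longrightarrow> u \<in> V \<and> v \<in> V"
    and sym: "\<forall>u v. E u v \<longrightarrow> E v u" and irr: "\<forall>v. \<not> E v v"
    and reg: "\<forall>v\<in>V. card {u\<in>V. E v u} = r" and r3: "r \<ge> 3"
    and uniq: "\<forall>u\<in>V. \<forall>v\<in>V. u \<noteq> v \<longrightarrow> card {w\<in>V. E u w \<and> E w v} = 1"
    and cV: "card V = r*(r-1)+1"
  shows False
proof -
  have "r - 1 \<noteq> 1" using r3 by simp
  then obtain p where p: "prime p" "p dvd r - 1" using prime_factor_nat by blast
  have p2: "p \<ge> 2" using p(1) prime_ge_2_nat by blast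
  have rmod: "r mod p = 1"
  proof -
    have "r = (r - 1) + 1" using r3 by simp
    then have "r mod p = ((r-1) mod p + 1 mod p) mod p" by (metis mod_add_eq)
    then show ?thesis using p p2 by simp
  qed
  have reg2: "\<forall>u\<in>V. card {w\<in>V. E w u} = r"
  proof
    fix u assume u: "u \<in> V"
    have "{w\<in>V. E w u} = {w\<in>V. E u w}" using sym by blast
    then show "card {w\<in>V. E w u} = r" using reg u by simp
  qed
  have W1: "card (Wl V E 1 v w) = (if E v w then 1 else 0)" if "v \<in> V" "w \<in> V" for v w
  proof -
    have "card (Wl V E (Suc 0) v w) = (\<Sum>w'\<in>{w'\<in>V. E w' w}. card (Wl V E 0 v w'))"
      by (rule Wl_Suc[OF fin that(2,1)])
    also have "\<dots> = (\<Sum>w'\<in>{w'\<in>V. E w' w}. if w' = v then 1 else 0)"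
      by (intro sum.cong) (auto simp: Wl_0)
    also have "\<dots> = (if E v w then 1 else 0)"
      using that fin by (simp add: sum.delta')
    finally show ?thesis by simp
  qed
  have W2: "card (Wl V E 2 v u) mod p = 1" if "v \<in> V" "u \<in> V" for v u
  proof -
    have "card (Wl V E (Suc 1) v u) = (\<Sum>w\<in>{w\<in>V. E w u}. card (Wl V E 1 v w))"
      by (rule Wl_Suc[OF fin that(2,1)])
    also have "\<dots> = (\<Sum>w\<in>{w\<in>V. E w u}. if E v w then 1 else 0)"
      using W1 that by (intro sum.cong) auto
    also have "\<dots> = card {w\<in>{w\<in>V. E w u}. E v w}"
      using sum.inter_filter[of "{w\<in>V. E w u}" "\<lambda>_. 1::nat" "E v", symmetric] fin by simp
    also have "{w\<in>{w\<in>V. E w u}. E v w} = {w\<in>V. E v w \<and> E w u}" by auto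
    finally have e: "card (Wl V E 2 v u) = card {w\<in>V. E v w \<and> E w u}" by (simp add: numeral_2_eq_2)
    show ?thesis
    proof (cases "v = u")
      case True
      then have "{w\<in>V. E v w \<and> E w u} = {w\<in>V. E v w}" using sym by blast
      then show ?thesis using e reg that rmod by simp
    next
      case False
      then show ?thesis using e uniq that p2 by simp
    qed
  qed
  have Wk: "card (Wl V E k v u) mod p = 1" if "k \<ge> 2" "v \<in> V" "u \<in> V" for k v u
    using that
  proof (induction k arbitrary: u rule: dec_induct)
    case base then show ?case using W2 by simp
  next
    case (step k)
    have "card (Wl V E (Suc k) v u) = (\<Sum>w\<in>{w\<in>V. E w u}. card (Wl V E k v w))"
      by (rule Wl_Suc[OF fin step.prems(2,1)])
    then have "card (Wl V E (Suc k) v u) mod p = (\<Sum>w\<in>{w\<in>V. E w u}. card (Wl V E k v w) mod p) mod p"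
      by (simp add: mod_sum_eq)
    also have "\<dots> = (\<Sum>w\<in>{w\<in>V. E w u}. 1) mod p"
      using step by (intro arg_cong[where f = "\<lambda>x. x mod p"] sum.cong) auto
    also have "\<dots> = 1" using reg2 step.prems rmod by simp
    finally show ?case .
  qed
  define CW where "CW = {ys. length ys = p \<and> set ys \<subseteq> V \<and> successively E ys \<and> E (last ys) (hd ys)}"
  have fCW: "finite CW"
    by (rule finite_subset[of _ "{xs. set xs \<subseteq> V \<and> length xs = p}"])
       (auto simp: CW_def intro: finite_lists_length_eq[OF fin])
  have hdV: "hd ys \<in> V" if "ys \<in> CW" for ys
  proof -
    have "ys \<noteq> []" using that p2 CW_def by auto
    then show ?thesis using that CW_def by auto
  qed
  have cv: "card {ys\<in>CW. hd ys = v} = card (Wl V E p v v)" if v: "v \<in> V" for v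
  proof -
    have "Wl V E p v v = (\<lambda>ys. tl ys @ [v]) ` {ys\<in>CW. hd ys = v}"
    proof
      show "Wl V E p v v \<subseteq> (\<lambda>ys. tl ys @ [v]) ` {ys\<in>CW. hd ys = v}"
      proof
        fix xs assume xs: "xs \<in> Wl V E p v v"
        then have ne: "xs \<noteq> []" using p2 unfolding Wl_def by auto
        define zs where "zs = butlast xs"
        have lx: "last xs = v" using xs ne unfolding Wl_def by auto
        have xe: "xs = zs @ [v]" using append_butlast_last_id[OF ne] lx zs_def by simp
        have sc: "successively E (v # zs) \<and> E (last (v # zs)) v"
          using xs xe succ_snoc[of E v zs v] unfolding Wl_def by auto
        have "v # zs \<in> CW" using xs xe sc v unfolding Wl_def CW_def by auto
        then show "xs \<in> (\<lambda>ys. tl ys @ [v]) ` {ys\<in>CW. hd ys = v}" using xe by force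
      qed
      show "(\<lambda>ys. tl ys @ [v]) ` {ys\<in>CW. hd ys = v} \<subseteq> Wl V E p v v"
      proof
        fix xs assume "xs \<in> (\<lambda>ys. tl ys @ [v]) ` {ys\<in>CW. hd ys = v}"
        then obtain ys where ys: "ys \<in> CW" "hd ys = v" and xe: "xs = tl ys @ [v]" by auto
        have ne: "ys \<noteq> []" using ys p2 CW_def by auto
        then obtain zs where ye: "ys = v # zs" using ys(2) by (cases ys) auto
        have sy: "successively E (v # zs)" "E (last (v # zs)) v" "length (v # zs) = p" "set (v # zs) \<subseteq> V"
          using ys(1) unfolding ye CW_def by auto
        have "xs = zs @ [v]" using xe ye by simp
        then show "xs \<in> Wl V E p v v" using sy succ_snoc[of E v zs v] unfolding Wl_def by auto
      qed
    qed
    moreover have "inj_on (\<lambda>ys. tl ys @ [v]) {ys\<in>CW. hd ys = v}"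
    proof (rule inj_onI)
      fix y1 y2 assume y: "y1 \<in> {ys\<in>CW. hd ys = v}" "y2 \<in> {ys\<in>CW. hd ys = v}" "tl y1 @ [v] = tl y2 @ [v]"
      have l1: "length y1 = p" "length y2 = p" using y(1,2) unfolding CW_def by auto
      then have n1: "y1 \<noteq> []" "y2 \<noteq> []" using p2 by auto
      have h1: "hd y1 = v" "hd y2 = v" using y(1,2) by auto
      obtain z1 where z1: "y1 = v # z1" using n1(1) h1(1) by (cases y1) auto
      obtain z2 where z2: "y2 = v # z2" using n1(2) h1(2) by (cases y2) auto
      show "y1 = y2" using y(3) z1 z2 by simp
    qed
    ultimately show ?thesis by (simp add: card_image)
  qed
  have "card CW = (\<Sum>v\<in>V. card {ys\<in>CW. hd ys = v})"
  proof -
    have "CW = (\<Union>v\<in>V. {ys\<in>CW. hd ys = v})" using hdV by auto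
    moreover have "card (\<Union>v\<in>V. {ys\<in>CW. hd ys = v}) = (\<Sum>v\<in>V. card {ys\<in>CW. hd ys = v})"
      by (rule card_UN_disjoint) (use fin fCW in auto)
    ultimately show ?thesis by simp
  qed
  also have "\<dots> = (\<Sum>v\<in>V. card (Wl V E p v v))" using cv by simp
  finally have cCW: "card CW = (\<Sum>v\<in>V. card (Wl V E p v v))" .
  have "card CW mod p = (\<Sum>v\<in>V. card (Wl V E p v v) mod p) mod p" using cCW by (simp add: mod_sum_eq)
  also have "\<dots> = (\<Sum>v\<in>V. 1) mod p" using Wk p2 by (intro arg_cong[where f = "\<lambda>x. x mod p"] sum.cong) auto
  also have "\<dots> = card V mod p" by simp
  also have "\<dots> = 1"
  proof -
    have "p dvd r * (r-1)" using p(2) by simp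
    then have "(r*(r-1)) mod p = 0" by simp
    then show ?thesis using cV p2 by (simp add: mod_Suc)
  qed
  finally have m1: "card CW mod p = 1" .
  have "p dvd card CW"
  proof (rule rot_dvd[OF p(1) fCW])
    fix ys assume ys: "ys \<in> CW"
    have cw: "length ys = p" "set ys \<subseteq> V" "successively E ys" "E (last ys) (hd ys)"
      using ys unfolding CW_def by auto
    have l: "length ys = p" using cw by simp
    have ne: "ys \<noteq> []" using l p2 by auto
    obtain y zs where yz: "ys = y # zs" using ne list.exhaust by blast
    have zne: "zs \<noteq> []" using l yz p2 by auto
    have s0: "successively E (y # zs)" using cw(3) yz by simp
    have s1: "successively E zs" "E y (hd zs)" using s0 zne by (auto simp: successively_Cons)
    have s2: "E (last zs) y" using cw(4) yz zne by simp
    have s3: "successively E (zs @ [y])" using s1 s2 successively_append_iff[of E zs "[y]"] zne by simp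
    have "zs @ [y] \<in> CW" unfolding CW_def using cw(1,2) yz s3 s1 zne by auto
    then have "rotate1 ys \<in> CW" using yz by simp
    then show "length ys = p \<and> rotate1 ys \<in> CW" using l by simp
    show "\<not> (\<forall>i<p. ys ! i = ys ! 0)"
    proof
      assume c: "\<forall>i<p. ys ! i = ys ! 0"
      have "1 < p" using p2 by simp
      then have "ys ! 1 = ys ! 0" using c by blast
      moreover have "ys ! 1 = hd zs" using yz zne by (cases zs) auto
      moreover have "ys ! 0 = y" using yz by simp
      ultimately have "hd zs = y" by simp
      then show False using s1 irr by simp
    qed
  qed
  then show False using m1 p2 by simp
qed


context incs begin

lemma CL2:
  assumes conn: "\<forall>p\<in>P. \<forall>q\<in>P. RP\<^sup>*\<^sup>* p q" and ne: "P \<noteq> {}"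
  shows "(\<exists>T\<subseteq>P. (\<forall>x\<in>T. \<forall>y\<in>T. \<not> col x y) \<and> card P \<le> r*(r-1)*card T)
         \<or> ((\<forall>p\<in>P. \<forall>q\<in>P. p \<noteq> q \<longrightarrow> col p q) \<and> card P = r*(r-1)+1)"
proof -
  from CL[OF conn] show ?thesis
  proof
    assume comp: "\<forall>p\<in>P. \<forall>q\<in>P. p \<noteq> q \<longrightarrow> col p q"
    obtain x where x: "x \<in> P" using ne by auto
    have "P \<subseteq> insert x (nb x)"
    proof
      fix y assume y: "y \<in> P"
      show "y \<in> insert x (nb x)"
      proof (cases "y = x")
        case False
        then have "col x y" using comp x y by simp
        then show ?thesis using y nb_def by simp
      qed simp
    qed
    then have "card P \<le> card (insert x (nb x))" using fin_nb by (intro card_mono) auto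
    also have "\<dots> \<le> Suc (card (nb x))" by (rule card_insert_le_m1) (use fin_nb in auto)
    finally have cP: "card P \<le> r*(r-1)+1" using deg_le[OF x] by simp
    show ?thesis
    proof (cases "card P = r*(r-1)+1")
      case True then show ?thesis using comp by simp
    next
      case False
      then have "card P \<le> r*(r-1)*card {x}" using cP by simp
      moreover have "\<forall>a\<in>{x}. \<forall>b\<in>{x}. \<not> col a b" using col_irr by simp
      ultimately show ?thesis using x by blast
    qed
  qed simp
qed

end

locale rgraph =
  fixes V :: "'a set" and E :: "'a \<Rightarrow> 'a \<Rightarrow> bool" and r :: nat
  assumes r3: "r \<ge> 3" and sg: "simple_graph V E" and neV: "V \<noteq> {}"
    and cn: "connected_graph V E" and rg: "regular V E r"
begin

lemma finV: "finite V" using sg unfolding simple_graph_def by auto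
lemma Esym: "E u v \<Longrightarrow> E v u" using sg unfolding simple_graph_def by auto
lemma Eirr: "\<not> E v v" using sg unfolding simple_graph_def by auto
lemma EV: "E u v \<Longrightarrow> u \<in> V \<and> v \<in> V" using sg unfolding simple_graph_def by auto

lemma nbc: "v \<in> V \<Longrightarrow> card (nbhd V E v) = r" using rg unfolding regular_def by auto
lemma nb_alt: "{c\<in>V. E p c} = nbhd V E p" unfolding nbhd_def using Esym by auto
lemma nb_alt2: "{c\<in>V. E c p} = nbhd V E p" unfolding nbhd_def by auto

definition Hs where "Hs u v \<longleftrightarrow> u \<in> V \<and> v \<in> V \<and> u \<noteq> v \<and> (\<exists>w\<in>V. E u w \<and> E v w)"

lemma Hs_sym: "symp Hs" unfolding symp_def Hs_def by auto
lemma Hs_rsym: "Hs\<^sup>*\<^sup>* x y \<Longrightarrow> Hs\<^sup>*\<^sup>* y x" using symp_rtranclp[OF Hs_sym] by (simp add: sympD)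

lemma Hs_share: "E y a \<Longrightarrow> E y b \<Longrightarrow> Hs\<^sup>*\<^sup>* a b"
proof (cases "a = b")
  case False
  assume "E y a" "E y b"
  then have "Hs a b" unfolding Hs_def using EV Esym False by blast
  then show ?thesis by simp
qed simp

lemma walk:
  assumes "E\<^sup>*\<^sup>* x z"
  shows "Hs\<^sup>*\<^sup>* x z \<or> (\<exists>w. Hs\<^sup>*\<^sup>* x w \<and> E w z)"
  using assms
proof (induction rule: rtranclp_induct)
  case base then show ?case by simp
next
  case (step y z)
  from step(3) show ?case
  proof
    assume "Hs\<^sup>*\<^sup>* x y" then show ?thesis using step(2) by blast
  next
    assume "\<exists>w. Hs\<^sup>*\<^sup>* x w \<and> E w y"
    then obtain w where w: "Hs\<^sup>*\<^sup>* x w" "E w y" by blast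
    have "Hs\<^sup>*\<^sup>* w z" using Hs_share[of y w z] w(2) step(2) Esym by blast
    then show ?thesis using w(1) by (meson rtranclp_trans)
  qed
qed

lemma transport:
  assumes "Hs\<^sup>*\<^sup>* w u" "E w z"
  shows "\<exists>z'. E u z' \<and> Hs\<^sup>*\<^sup>* z z'"
  using assms
proof (induction arbitrary: z rule: rtranclp_induct)
  case base then show ?case by blast
next
  case (step y u)
  obtain z1 where z1: "E y z1" "Hs\<^sup>*\<^sup>* z z1" using step(3)[OF step(4)] by blast
  obtain m where m: "m \<in> V" "E y m" "E u m" using step(2) Hs_def by auto
  have "Hs\<^sup>*\<^sup>* z1 m" using Hs_share[of y z1 m] z1 m by blast
  then show ?case using z1 m by (meson rtranclp_trans)
qed


lemma nb_fin: "finite (nbhd V E v)" unfolding nbhd_def using finV by simp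
lemma nb_subV: "nbhd V E v \<subseteq> V" unfolding nbhd_def by auto

lemma tdn_fin: "finite {card S | S. ktuple_tds V E k S}"
proof (rule finite_subset[of _ "{..card V}"])
  show "{card S | S. ktuple_tds V E k S} \<subseteq> {..card V}"
    using finV card_mono unfolding ktuple_tds_def by fastforce
qed simp

lemma tdn_le: "ktuple_tds V E k S \<Longrightarrow> ktuple_tdn V E k \<le> card S"
  unfolding ktuple_tdn_def using tdn_fin by (intro Min_le) auto

lemma tdsV: "k \<le> r \<Longrightarrow> ktuple_tds V E k V"
proof -
  assume k: "k \<le> r"
  have "\<And>v. nbhd V E v \<inter> V = nbhd V E v" using nb_subV by auto
  then show ?thesis unfolding ktuple_tds_def using nbc k by auto
qed

lemma tdn_attain: "k \<le> r \<Longrightarrow> \<exists>S. ktuple_tds V E k S \<and> card S = ktuple_tdn V E k"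
proof -
  assume "k \<le> r"
  then have ne: "{card S | S. ktuple_tds V E k S} \<noteq> {}" using tdsV by blast
  have "ktuple_tdn V E k \<in> {card S | S. ktuple_tds V E k S}"
    unfolding ktuple_tdn_def using tdn_fin ne by (rule Min_in)
  then show ?thesis by auto
qed

definition gpack where "gpack T \<longleftrightarrow> T \<subseteq> V \<and> (\<forall>x\<in>T. \<forall>y\<in>T. x \<noteq> y \<longrightarrow> \<not> (\<exists>w\<in>V. E x w \<and> E y w))"

lemma pack_nb: assumes "gpack T" "v \<in> V" shows "card (nbhd V E v \<inter> T) \<le> 1"
proof -
  have "finite (nbhd V E v \<inter> T)" using nb_fin by auto
  moreover have "\<forall>a\<in>nbhd V E v \<inter> T. \<forall>b\<in>nbhd V E v \<inter> T. a = b"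
    using assms unfolding gpack_def nbhd_def by auto
  ultimately show ?thesis using card_le_Suc0_iff_eq by (metis One_nat_def)
qed

lemma pack_bound:
  assumes p: "gpack T"
  shows "ktuple_tdn V E (r-1) \<le> card V - card T"
proof -
  have tds: "ktuple_tds V E (r-1) (V - T)"
    unfolding ktuple_tds_def
  proof (intro conjI ballI)
    show "V - T \<subseteq> V" by auto
    fix v assume v: "v \<in> V"
    have fN: "finite (nbhd V E v)" using nb_fin by auto
    have "nbhd V E v \<inter> (V - T) = nbhd V E v - (nbhd V E v \<inter> T)" unfolding nbhd_def by auto
    then have "card (nbhd V E v \<inter> (V - T)) = card (nbhd V E v) - card (nbhd V E v \<inter> T)"
      using fN by (simp add: card_Diff_subset)
    then show "r - 1 \<le> card (nbhd V E v \<inter> (V - T))" using nbc[OF v] pack_nb[OF p v] by linarith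
  qed
  have TV: "T \<subseteq> V" using p unfolding gpack_def by simp
  have "card (V - T) = card V - card T" using card_Diff_subset[OF finite_subset[OF TV finV] TV] .
  then show ?thesis using tdn_le[OF tds] by simp
qed


lemma qeq: "(r-1)^2 + (r-1) + 1 = r*(r-1) + 1"
proof -
  obtain t where "r = t + 1" using r3 by (metis add.commute le_Suc_ex le_trans one_le_numeral)
  then show ?thesis by (simp add: power2_eq_square algebra_simps)
qed

lemma part2:
  assumes pp: "is_pp_incidence_graph V E (r-1)"
  shows "card V = 2*(r*(r-1)+1) \<and> ktuple_tdn V E (r-1) = 2*r*(r-1)"
proof -
  obtain P L :: "'a set" and I f where pl: "proj_plane P L I (r-1)"
    and iso: "graph_iso V E (inc_vertices P L) (inc_adj P L I) f"
    using pp unfolding is_pp_incidence_graph_def by blast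
  have bij: "bij_betw f V (Inl ` P \<union> Inr ` L)" using iso unfolding graph_iso_def inc_vertices_def by simp
  have adj: "\<And>u v. u \<in> V \<Longrightarrow> v \<in> V \<Longrightarrow> E u v \<longleftrightarrow> inc_adj P L I (f u) (f v)"
    using iso unfolding graph_iso_def by blast
  note ppd = pl[unfolded proj_plane_def]
  have fP: "finite P" "finite L" and cP0: "card P = (r-1)^2 + (r-1) + 1" "card L = (r-1)^2 + (r-1) + 1"
    using ppd[THEN conjunct1] ppd[THEN conjunct2, THEN conjunct1] ppd[THEN conjunct2, THEN conjunct2, THEN conjunct1]
      ppd[THEN conjunct2, THEN conjunct2, THEN conjunct2, THEN conjunct1] by simp_all
  have cP: "card P = r*(r-1)+1" "card L = r*(r-1)+1" using cP0 qeq by simp_all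
  have cV: "card V = 2*(r*(r-1)+1)"
  proof -
    have "card V = card (Inl ` P \<union> Inr ` L)" using bij by (rule bij_betw_same_card)
    also have "\<dots> = card P + card L"
    proof -
      have "card (Inl ` P \<union> Inr ` L) = card (Inl ` P :: ('a + 'a) set) + card (Inr ` L :: ('a + 'a) set)"
        using fP by (intro card_Un_disjoint) auto
      moreover have "card (Inl ` P :: ('a + 'a) set) = card P" by (simp add: card_image)
      moreover have "card (Inr ` L :: ('a + 'a) set) = card L" by (simp add: card_image)
      ultimately show ?thesis by simp
    qed
    finally show ?thesis using cP by simp
  qed
  have injf: "inj_on f V" using bij_betw_imp_inj_on[OF bij] .
  have fV: "f ` V = Inl ` P \<union> Inr ` L" using bij_betw_imp_surj_on[OF bij] .
  have lines1: "\<forall>p1\<in>P. \<forall>p2\<in>P. p1 \<noteq> p2 \<longrightarrow> (\<exists>!l. l \<in> L \<and> I p1 l \<and> I p2 l)"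
    by (rule ppd[THEN conjunct2, THEN conjunct2, THEN conjunct2, THEN conjunct2, THEN conjunct2, THEN conjunct2, THEN conjunct1])
  have points1: "\<forall>l1\<in>L. \<forall>l2\<in>L. l1 \<noteq> l2 \<longrightarrow> (\<exists>!p. p \<in> P \<and> I p l1 \<and> I p l2)"
    by (rule ppd[THEN conjunct2, THEN conjunct2, THEN conjunct2, THEN conjunct2, THEN conjunct2, THEN conjunct2, THEN conjunct2])
  have lines: "\<forall>p1\<in>P. \<forall>p2\<in>P. p1 \<noteq> p2 \<longrightarrow> (\<exists>l. l \<in> L \<and> I p1 l \<and> I p2 l)"
  proof (intro ballI impI)
    fix p1 p2 assume "p1 \<in> P" "p2 \<in> P" "p1 \<noteq> p2"
    then show "\<exists>l. l \<in> L \<and> I p1 l \<and> I p2 l" using lines1 ex1_implies_ex by metis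
  qed
  have points: "\<forall>l1\<in>L. \<forall>l2\<in>L. l1 \<noteq> l2 \<longrightarrow> (\<exists>p. p \<in> P \<and> I p l1 \<and> I p l2)"
  proof (intro ballI impI)
    fix p1 p2 assume "p1 \<in> L" "p2 \<in> L" "p1 \<noteq> p2"
    then show "\<exists>l. l \<in> P \<and> I l p1 \<and> I l p2" using points1 ex1_implies_ex by metis
  qed
  have low: "card V - 2 \<le> card S" if tds: "ktuple_tds V E (r-1) S" for S
  proof -
    define T where "T = V - S"
    have SV: "S \<subseteq> V" using tds unfolding ktuple_tds_def by auto
    have nT: "card (nbhd V E v \<inter> T) \<le> 1" if v: "v \<in> V" for v
    proof -
      have "nbhd V E v = (nbhd V E v \<inter> S) \<union> (nbhd V E v \<inter> T)" using nb_subV T_def by auto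
      moreover have "(nbhd V E v \<inter> S) \<inter> (nbhd V E v \<inter> T) = {}" using T_def by auto
      moreover have "finite (nbhd V E v \<inter> S)" "finite (nbhd V E v \<inter> T)" using nb_fin by auto
      ultimately have "card (nbhd V E v) = card (nbhd V E v \<inter> S) + card (nbhd V E v \<inter> T)"
        using card_Un_disjoint by metis
      moreover have "card (nbhd V E v \<inter> S) \<ge> r - 1" using tds v unfolding ktuple_tds_def by auto
      moreover have "card (nbhd V E v) = r" using nbc v by simp
      ultimately show ?thesis using r3 by linarith
    qed
    have two: False if xy: "x \<in> T" "y \<in> T" "x \<noteq> y" "u \<in> V" "E x u" "E y u" for x y u
    proof -
      have "{x,y} \<subseteq> nbhd V E u \<inter> T" using xy T_def by (auto simp: nbhd_def)
      then have "card {x,y} \<le> card (nbhd V E u \<inter> T)" using nb_fin by (intro card_mono) auto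
      then show False using nT[OF xy(4)] xy(3) by simp
    qed
    define TP where "TP = {x\<in>T. \<exists>p. f x = Inl p}"
    define TL where "TL = {x\<in>T. \<exists>l. f x = Inr l}"
    have TU: "T = TP \<union> TL" unfolding TP_def TL_def by (auto intro: sum.exhaust)
    have fT: "finite T" using T_def finV by simp
    have c1: "card TP \<le> 1"
    proof -
      have "\<forall>a\<in>TP. \<forall>b\<in>TP. a = b"
      proof (intro ballI, rule ccontr)
        fix x y assume x: "x \<in> TP" and y: "y \<in> TP" and ne: "x \<noteq> y"
        obtain p1 p2 where p: "f x = Inl p1" "f y = Inl p2" using x y TP_def by auto
        have xyV: "x \<in> V" "y \<in> V" using x y TP_def T_def by auto
        have pP: "p1 \<in> P" "p2 \<in> P" using p xyV fV by force+
        have "p1 \<noteq> p2"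
        proof
          assume "p1 = p2" then have "f x = f y" using p by simp
          then show False using injf xyV ne unfolding inj_on_def by blast
        qed
        then obtain l where l: "l \<in> L" "I p1 l" "I p2 l" using lines pP by blast
        have "Inr l \<in> f ` V" using fV l by auto
        then obtain u where u: "u \<in> V" "f u = Inr l" by auto
        have "E x u" "E y u" using adj[OF xyV(1) u(1)] adj[OF xyV(2) u(1)] p u l pP by auto
        then show False using two x y ne u TP_def by auto
      qed
      then show ?thesis using fT TP_def card_le_Suc0_iff_eq[of TP] by auto
    qed
    have c2: "card TL \<le> 1"
    proof -
      have "\<forall>a\<in>TL. \<forall>b\<in>TL. a = b"
      proof (intro ballI, rule ccontr)
        fix x y assume x: "x \<in> TL" and y: "y \<in> TL" and ne: "x \<noteq> y"
        obtain p1 p2 where p: "f x = Inr p1" "f y = Inr p2" using x y TL_def by auto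
        have xyV: "x \<in> V" "y \<in> V" using x y TL_def T_def by auto
        have pP: "p1 \<in> L" "p2 \<in> L" using p xyV fV by force+
        have "p1 \<noteq> p2"
        proof
          assume "p1 = p2" then have "f x = f y" using p by simp
          then show False using injf xyV ne unfolding inj_on_def by blast
        qed
        then obtain l where l: "l \<in> P" "I l p1" "I l p2" using points pP by blast
        have "Inl l \<in> f ` V" using fV l by auto
        then obtain u where u: "u \<in> V" "f u = Inl l" by auto
        have "E x u" "E y u" using adj[OF xyV(1) u(1)] adj[OF xyV(2) u(1)] p u l pP by auto
        then show False using two x y ne u TL_def by auto
      qed
      then show ?thesis using fT TL_def card_le_Suc0_iff_eq[of TL] by auto
    qed
    have "card T \<le> 2" using TU card_Un_le[of TP TL] c1 c2 by simp
    moreover have "card T = card V - card S" using T_def card_Diff_subset[OF finite_subset[OF SV finV] SV] by simp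
    ultimately show ?thesis using card_mono[OF finV SV] by linarith
  qed
  have "P \<noteq> {}" "L \<noteq> {}" using cP by auto
  then obtain p0 l0 where p0: "p0 \<in> P" and l0: "l0 \<in> L" by blast
  have "Inl p0 \<in> f ` V" "Inr l0 \<in> f ` V" using fV p0 l0 by auto
  then obtain x0 y0 where x0: "x0 \<in> V" "f x0 = Inl p0" and y0: "y0 \<in> V" "f y0 = Inr l0" by (auto simp del: )
  have xy0: "x0 \<noteq> y0" using x0 y0 by auto
  have tdsS: "ktuple_tds V E (r-1) (V - {x0,y0})"
    unfolding ktuple_tds_def
  proof (intro conjI ballI)
    show "V - {x0,y0} \<subseteq> V" by auto
    fix v assume v: "v \<in> V"
    have nboth: "\<not> (x0 \<in> nbhd V E v \<and> y0 \<in> nbhd V E v)"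
    proof
      assume "x0 \<in> nbhd V E v \<and> y0 \<in> nbhd V E v"
      then have "E x0 v" "E y0 v" unfolding nbhd_def by auto
      then have a1: "inc_adj P L I (Inl p0) (f v)" "inc_adj P L I (Inr l0) (f v)"
        using adj[OF x0(1) v] adj[OF y0(1) v] x0 y0 by auto
      show False using a1 by (cases "f v") auto
    qed
    have "card (nbhd V E v \<inter> {x0,y0}) \<le> 1"
    proof -
      have "nbhd V E v \<inter> {x0,y0} \<subseteq> {x0} \<or> nbhd V E v \<inter> {x0,y0} \<subseteq> {y0}" using nboth by auto
      then show ?thesis
      proof
        assume "nbhd V E v \<inter> {x0,y0} \<subseteq> {x0}"
        then have "card (nbhd V E v \<inter> {x0,y0}) \<le> card {x0}" by (intro card_mono) auto
        then show ?thesis by simp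
      next
        assume "nbhd V E v \<inter> {x0,y0} \<subseteq> {y0}"
        then have "card (nbhd V E v \<inter> {x0,y0}) \<le> card {y0}" by (intro card_mono) auto
        then show ?thesis by simp
      qed
    qed
    moreover have "card (nbhd V E v \<inter> (V - {x0,y0})) = card (nbhd V E v) - card (nbhd V E v \<inter> {x0,y0})"
    proof -
      have "nbhd V E v \<inter> (V - {x0,y0}) = nbhd V E v - (nbhd V E v \<inter> {x0,y0})" using nb_subV by auto
      then show ?thesis using nb_fin by (simp add: card_Diff_subset)
    qed
    ultimately show "r - 1 \<le> card (nbhd V E v \<inter> (V - {x0,y0}))" using nbc[OF v] by linarith
  qed
  have cS: "card (V - {x0,y0}) = card V - 2" using x0 y0 xy0 finV by (simp add: card_Diff_subset)
  obtain S where S: "ktuple_tds V E (r-1) S" "card S = ktuple_tdn V E (r-1)" using tdn_attain[of "r-1"] by auto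
  have "ktuple_tdn V E (r-1) = card V - 2" using tdn_le[OF tdsS] cS low[OF S(1)] S(2) by linarith
  then show ?thesis using cV by (simp add: algebra_simps)
qed


lemma inst_VV: "incs V V E r"
  unfolding incs_def using finV r3 nb_alt nb_alt2 nbc by simp

lemma RP_VV: "incs.RP V V E = Hs"
  by (intro ext) (auto simp: incs.RP_def[OF inst_VV] incs.col_def[OF inst_VV] Hs_def)

lemma part1_conn:
  assumes conn: "\<forall>p\<in>V. \<forall>q\<in>V. Hs\<^sup>*\<^sup>* p q"
  shows "\<exists>T. gpack T \<and> card V \<le> r*(r-1)*card T"
proof -
  have conn': "\<forall>p\<in>V. \<forall>q\<in>V. (incs.RP V V E)\<^sup>*\<^sup>* p q" using conn RP_VV by simp
  from incs.CL2[OF inst_VV conn' neV] show ?thesis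
  proof
    assume "\<exists>T\<subseteq>V. (\<forall>x\<in>T. \<forall>y\<in>T. \<not> incs.col V E x y) \<and> card V \<le> r*(r-1)*card T"
    then obtain T where T: "T \<subseteq> V" "\<forall>x\<in>T. \<forall>y\<in>T. \<not> incs.col V E x y" "card V \<le> r*(r-1)*card T"
      by blast
    have "gpack T" unfolding gpack_def using T(1,2) by (auto simp: incs.col_def[OF inst_VV])
    then show ?thesis using T(3) by blast
  next
    assume comp: "(\<forall>p\<in>V. \<forall>q\<in>V. p \<noteq> q \<longrightarrow> incs.col V E p q) \<and> card V = r*(r-1)+1"
    have u: "\<forall>p1\<in>V. \<forall>p2\<in>V. p1 \<noteq> p2 \<longrightarrow> (\<exists>!c. c \<in> V \<and> E p1 c \<and> E p2 c)"
      using incs.complete_struct(2)[OF inst_VV] comp by blast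
    have uniq: "\<forall>u\<in>V. \<forall>v\<in>V. u \<noteq> v \<longrightarrow> card {w\<in>V. E u w \<and> E w v} = 1"
    proof (intro ballI impI)
      fix u v assume uv: "u \<in> V" "v \<in> V" "u \<noteq> v"
      then obtain c where c: "c \<in> V" "E u c" "E v c" "\<And>c'. c' \<in> V \<and> E u c' \<and> E v c' \<Longrightarrow> c' = c"
        using u by metis
      have "{w\<in>V. E u w \<and> E w v} = {c}" using c Esym by blast
      then show "card {w\<in>V. E u w \<and> E w v} = 1" by simp
    qed
    have False
    proof (rule friendship_regular[of V E r])
      show "finite V" by (rule finV)
      show "\<forall>u v. E u v \<longrightarrow> u \<in> V \<and> v \<in> V" using EV by blast
      show "\<forall>u v. E u v \<longrightarrow> E v u" using Esym by blast
      show "\<forall>v. \<not> E v v" using Eirr by blast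
      show "\<forall>v\<in>V. card {u\<in>V. E v u} = r" using nb_alt nbc by simp
      show "r \<ge> 3" by (rule r3)
      show "\<forall>u\<in>V. \<forall>v\<in>V. u \<noteq> v \<longrightarrow> card {w\<in>V. E u w \<and> E w v} = 1" by (rule uniq)
      show "card V = r*(r-1)+1" using comp by simp
    qed
    then show ?thesis by simp
  qed
qed


lemma pp_from:
  assumes XY: "X \<union> Y = V" "X \<inter> Y = {}"
    and eXY: "\<forall>u\<in>X. \<forall>w. E u w \<longrightarrow> w \<in> Y"
    and eYX: "\<forall>u\<in>Y. \<forall>w. E u w \<longrightarrow> w \<in> X"
    and inst: "incs X Y E r"
    and comp: "\<forall>p\<in>X. \<forall>q\<in>X. p \<noteq> q \<longrightarrow> incs.col Y E p q" and cX: "card X = r*(r-1)+1"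
  shows "is_pp_incidence_graph V E (r-1)"
proof -
  have cY: "card Y = r*(r-1)+1" by (rule incs.complete_struct(1)[OF inst comp cX])
  have ln: "\<forall>p1\<in>X. \<forall>p2\<in>X. p1 \<noteq> p2 \<longrightarrow> (\<exists>!c. c \<in> Y \<and> E p1 c \<and> E p2 c)"
    by (rule incs.complete_struct(2)[OF inst comp cX])
  have pt: "\<forall>c1\<in>Y. \<forall>c2\<in>Y. c1 \<noteq> c2 \<longrightarrow> (\<exists>!p. p \<in> X \<and> E p c1 \<and> E p c2)"
    by (rule incs.complete_struct(3)[OF inst comp cX])
  have fX: "finite X" "finite Y" using XY finV by auto
  have ct: "\<forall>p\<in>X. card {c\<in>Y. E p c} = r" using inst unfolding incs_def by blast
  have pr: "\<forall>c\<in>Y. card {p\<in>X. E p c} = r" using inst unfolding incs_def by blast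
  have r1: "r - 1 + 1 = r" using r3 by simp
  have pl: "proj_plane X Y E (r-1)"
    unfolding proj_plane_def using fX cX cY qeq ct pr r1 ln pt by simp
  define f where "f = (\<lambda>v. if v \<in> X then Inl v else (Inr v :: 'a + 'a))"
  have inj: "inj_on f V" unfolding inj_on_def f_def by auto
  have img: "f ` V = Inl ` X \<union> Inr ` Y"
  proof
    show "f ` V \<subseteq> Inl ` X \<union> Inr ` Y" using XY unfolding f_def by auto
    show "Inl ` X \<union> Inr ` Y \<subseteq> f ` V"
    proof
      fix z assume "z \<in> Inl ` X \<union> Inr ` Y"
      then show "z \<in> f ` V"
      proof
        assume "z \<in> Inl ` X"
        then obtain x where "x \<in> X" "z = Inl x" by auto
        then show ?thesis using XY unfolding f_def by (auto intro!: image_eqI[of _ _ x])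
      next
        assume "z \<in> Inr ` Y"
        then obtain y where y: "y \<in> Y" "z = Inr y" by auto
        then have "y \<notin> X" using XY by auto
        then show ?thesis using y XY unfolding f_def by (auto intro!: image_eqI[of _ _ y])
      qed
    qed
  qed
  have adj: "\<forall>u\<in>V. \<forall>v\<in>V. E u v \<longleftrightarrow> inc_adj X Y E (f u) (f v)"
  proof (intro ballI)
    fix u v assume u: "u \<in> V" and v: "v \<in> V"
    show "E u v \<longleftrightarrow> inc_adj X Y E (f u) (f v)"
    proof (cases "u \<in> X")
      case True
      show ?thesis
      proof (cases "v \<in> X")
        case True
        have "\<not> E u v" using eXY \<open>u \<in> X\<close> True XY by blast
        then show ?thesis using \<open>u \<in> X\<close> True f_def by simp
      next
        case False
        then have "v \<in> Y" using v XY by auto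
        then show ?thesis using \<open>u \<in> X\<close> False f_def by simp
      qed
    next
      case False
      then have uY: "u \<in> Y" using u XY by auto
      show ?thesis
      proof (cases "v \<in> X")
        case True
        then show ?thesis using uY False f_def Esym by auto
      next
        case False
        then have "v \<in> Y" using v XY by auto
        have "\<not> E u v" using eYX uY False by blast
        then show ?thesis using \<open>u \<notin> X\<close> False f_def by simp
      qed
    qed
  qed
  have "graph_iso V E (inc_vertices X Y) (inc_adj X Y E) f"
    unfolding graph_iso_def inc_vertices_def bij_betw_def using inj img adj by simp
  then show ?thesis unfolding is_pp_incidence_graph_def using pl by blast
qed


lemma transfer:
  assumes inst: "incs X Y E r" and XV: "X \<subseteq> V"
    and clo: "\<forall>u\<in>X. \<forall>w. Hs u w \<longrightarrow> w \<in> X"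
    and eXY: "\<forall>u\<in>X. \<forall>w. E u w \<longrightarrow> w \<in> Y"
    and p: "p \<in> X" and h: "Hs\<^sup>*\<^sup>* p q"
  shows "(incs.RP X Y E)\<^sup>*\<^sup>* p q \<and> q \<in> X"
  using h
proof (induction rule: rtranclp_induct)
  case base then show ?case using p by simp
next
  case (step y z)
  have yX: "y \<in> X" using step(3) by simp
  have zX: "z \<in> X" using clo yX step(2) by blast
  obtain w where w: "w \<in> V" "E y w" "E z w" "y \<noteq> z" using step(2) Hs_def by auto
  have "w \<in> Y" using eXY yX w(2) by blast
  then have "incs.RP X Y E y z"
    using yX zX w by (auto simp: incs.RP_def[OF inst] incs.col_def[OF inst])
  have "(incs.RP X Y E)\<^sup>*\<^sup>* p z" using step(3)[THEN conjunct1] \<open>incs.RP X Y E y z\<close>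
    by (rule rtranclp.rtrancl_into_rtrancl)
  then show ?case using zX by simp
qed

lemma part1_bip:
  assumes v0: "v0 \<in> V" and AV: "{u\<in>V. Hs\<^sup>*\<^sup>* v0 u} \<noteq> V"
  shows "(\<exists>T. gpack T \<and> card V \<le> r*(r-1)*card T) \<or> is_pp_incidence_graph V E (r-1)"
proof -
  define A where "A = {u\<in>V. Hs\<^sup>*\<^sup>* v0 u}"
  define B where "B = V - A"
  have AVs: "A \<subseteq> V" "B \<subseteq> V" "A \<union> B = V" "A \<inter> B = {}" using A_def B_def by auto
  have v0A: "v0 \<in> A" using v0 A_def by simp
  obtain z0 where z0: "z0 \<in> B" using AV A_def B_def by blast
  have Acl: "w \<in> A" if "u \<in> A" "Hs u w" for u w
    using that A_def Hs_def by (auto intro: rtranclp.rtrancl_into_rtrancl)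
  have AA: "Hs\<^sup>*\<^sup>* p q" if "p \<in> A" "q \<in> A" for p q
  proof -
    have "Hs\<^sup>*\<^sup>* p v0" using that A_def Hs_rsym by auto
    moreover have "Hs\<^sup>*\<^sup>* v0 q" using that A_def by auto
    ultimately show ?thesis by (rule rtranclp_trans)
  qed
  have Bcl: "w \<in> B" if "u \<in> B" "Hs u w" for u w
  proof (rule ccontr)
    assume "w \<notin> B"
    then have wA: "w \<in> A" using that Hs_def B_def by auto
    have "Hs w u" using that(2) Hs_sym by (simp add: sympD)
    then have "u \<in> A" using Acl[OF wA] by simp
    then show False using that B_def by simp
  qed
  have wlk: "\<exists>x. x \<in> A \<and> E x z" if z: "z \<in> B" for z
  proof -
    have "E\<^sup>*\<^sup>* v0 z" using cn v0 z AVs unfolding connected_graph_def by auto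
    then have "Hs\<^sup>*\<^sup>* v0 z \<or> (\<exists>w. Hs\<^sup>*\<^sup>* v0 w \<and> E w z)" by (rule walk)
    moreover have "\<not> Hs\<^sup>*\<^sup>* v0 z" using z A_def B_def by auto
    ultimately obtain x where x: "Hs\<^sup>*\<^sup>* v0 x" "E x z" by blast
    then have "x \<in> A" using A_def EV by auto
    then show ?thesis using x by blast
  qed
  have eAB: "w \<in> B" if "u \<in> A" "E u w" for u w
  proof (rule ccontr)
    assume "w \<notin> B"
    then have wA: "w \<in> A" using that EV B_def by auto
    obtain x where x: "x \<in> A" "E x z0" using wlk[OF z0] by blast
    have "Hs\<^sup>*\<^sup>* x u" using AA x(1) that(1) by simp
    then obtain z' where z': "E u z'" "Hs\<^sup>*\<^sup>* z0 z'" using transport x(2) by blast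
    have "Hs\<^sup>*\<^sup>* z' w" using Hs_share[of u z' w] z' that(2) by simp
    then have "Hs\<^sup>*\<^sup>* z0 w" using z'(2) by (rule rtranclp_trans[rotated])
    then have "Hs\<^sup>*\<^sup>* w z0" by (rule Hs_rsym)
    then have "Hs\<^sup>*\<^sup>* v0 z0" using wA A_def by (auto intro: rtranclp_trans)
    then show False using z0 A_def B_def by auto
  qed
  have eBA: "w \<in> A" if uw: "u \<in> B" "E u w" for u w
  proof (rule ccontr)
    assume "w \<notin> A"
    obtain x where x: "x \<in> A" "E x u" using wlk[OF uw(1)] by blast
    have "Hs\<^sup>*\<^sup>* x w" using Hs_share[of u x w] x(2) uw(2) Esym by simp
    moreover have "w \<in> V" using uw(2) EV by blast
    ultimately have "w \<in> A" using x(1) A_def by (auto intro: rtranclp_trans)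
    then show False using \<open>w \<notin> A\<close> by simp
  qed
  have BB: "Hs\<^sup>*\<^sup>* p q" if pq: "p \<in> B" "q \<in> B" for p q
  proof -
    obtain x1 where x1: "x1 \<in> A" "E x1 p" using wlk[OF pq(1)] by blast
    obtain x2 where x2: "x2 \<in> A" "E x2 q" using wlk[OF pq(2)] by blast
    have "Hs\<^sup>*\<^sup>* x1 x2" using AA x1 x2 by simp
    then obtain z' where z': "E x2 z'" "Hs\<^sup>*\<^sup>* p z'" using transport x1(2) by blast
    have "Hs\<^sup>*\<^sup>* z' q" using Hs_share[of x2 z' q] z' x2 by simp
    then show ?thesis using z'(2) by (rule rtranclp_trans[rotated])
  qed
  have nbA: "{c\<in>B. E p c} = nbhd V E p" if "p \<in> A" for p
  proof -
    have "{c\<in>B. E p c} = {c\<in>V. E p c}" using eAB[OF that] AVs EV by blast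
    then show ?thesis using nb_alt by simp
  qed
  have nbA2: "{p\<in>A. E p c} = nbhd V E c" if "c \<in> B" for c
  proof -
    have "{p\<in>A. E p c} = {p\<in>V. E p c}" using eBA[OF that] AVs EV Esym by blast
    then show ?thesis using nb_alt2 by simp
  qed
  have nbB: "{c\<in>A. E p c} = nbhd V E p" if "p \<in> B" for p
  proof -
    have "{c\<in>A. E p c} = {c\<in>V. E p c}" using eBA[OF that] AVs EV by blast
    then show ?thesis using nb_alt by simp
  qed
  have nbB2: "{p\<in>B. E p c} = nbhd V E c" if "c \<in> A" for c
  proof -
    have "{p\<in>B. E p c} = {p\<in>V. E p c}" using eAB[OF that] AVs EV Esym by blast
    then show ?thesis using nb_alt2 by simp
  qed
  have fin: "finite A" "finite B" using AVs finV finite_subset by auto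
  have iAB: "incs A B E r" unfolding incs_def using fin r3 nbA nbA2 nbc AVs by auto
  have iBA: "incs B A E r" unfolding incs_def using fin r3 nbB nbB2 nbc AVs by auto
  have Acl': "\<forall>u\<in>A. \<forall>w. Hs u w \<longrightarrow> w \<in> A" using Acl by blast
  have Bcl': "\<forall>u\<in>B. \<forall>w. Hs u w \<longrightarrow> w \<in> B" using Bcl by blast
  have eAB': "\<forall>u\<in>A. \<forall>w. E u w \<longrightarrow> w \<in> B" using eAB by blast
  have eBA': "\<forall>u\<in>B. \<forall>w. E u w \<longrightarrow> w \<in> A" using eBA by blast
  have connA: "\<forall>p\<in>A. \<forall>q\<in>A. (incs.RP A B E)\<^sup>*\<^sup>* p q"
  proof (intro ballI)
    fix p q assume pq: "p \<in> A" "q \<in> A"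
    show "(incs.RP A B E)\<^sup>*\<^sup>* p q" using transfer[OF iAB AVs(1) Acl' eAB' pq(1) AA[OF pq]] by simp
  qed
  have connB: "\<forall>p\<in>B. \<forall>q\<in>B. (incs.RP B A E)\<^sup>*\<^sup>* p q"
  proof (intro ballI)
    fix p q assume pq: "p \<in> B" "q \<in> B"
    show "(incs.RP B A E)\<^sup>*\<^sup>* p q" using transfer[OF iBA AVs(2) Bcl' eBA' pq(1) BB[OF pq]] by simp
  qed
  have neA: "A \<noteq> {}" using v0A by auto
  have neB: "B \<noteq> {}" using z0 by auto
  note rA = incs.CL2[OF iAB connA neA]
  note rB = incs.CL2[OF iBA connB neB]
  show ?thesis
  proof (cases "(\<forall>p\<in>A. \<forall>q\<in>A. p \<noteq> q \<longrightarrow> incs.col B E p q) \<and> card A = r*(r-1)+1")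
    case True
    then have "is_pp_incidence_graph V E (r-1)"
      using pp_from[OF AVs(3,4) eAB' eBA' iAB] by blast
    then show ?thesis by simp
  next
    case nA: False
    show ?thesis
    proof (cases "(\<forall>p\<in>B. \<forall>q\<in>B. p \<noteq> q \<longrightarrow> incs.col A E p q) \<and> card B = r*(r-1)+1")
      case True
      have BA: "B \<union> A = V" "B \<inter> A = {}" using AVs by auto
      have "is_pp_incidence_graph V E (r-1)"
        using pp_from[OF BA eBA' eAB' iBA] True by blast
      then show ?thesis by simp
    next
      case nB: False
      obtain TA where TA: "TA \<subseteq> A" "\<forall>x\<in>TA. \<forall>y\<in>TA. \<not> incs.col B E x y" "card A \<le> r*(r-1)*card TA"
        using rA nA by blast
      obtain TB where TB: "TB \<subseteq> B" "\<forall>x\<in>TB. \<forall>y\<in>TB. \<not> incs.col A E x y" "card B \<le> r*(r-1)*card TB"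
        using rB nB by blast
      have gp: "gpack (TA \<union> TB)" unfolding gpack_def
      proof (intro conjI ballI impI notI)
        show "TA \<union> TB \<subseteq> V" using TA TB AVs by auto
        fix x y assume x: "x \<in> TA \<union> TB" and y: "y \<in> TA \<union> TB" and ne: "x \<noteq> y"
          and "\<exists>w\<in>V. E x w \<and> E y w"
        then obtain w where w: "w \<in> V" "E x w" "E y w" by blast
        show False
        proof (cases "x \<in> TA")
          case xA: True
          then have wB: "w \<in> B" using eAB TA w by auto
          show False
          proof (cases "y \<in> TA")
            case True
            then have "incs.col B E x y" using xA ne w wB by (simp add: incs.col_def[OF iAB]) blast
            then show False using TA xA True by blast
          next
            case False
            then have "y \<in> B" using y TB by auto
            then have "w \<in> A" using eBA w by auto
            then show False using wB AVs by auto
          qed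
        next
          case xB: False
          then have xB': "x \<in> B" using x TB by auto
          then have wA: "w \<in> A" using eBA w by auto
          show False
          proof (cases "y \<in> TB")
            case True
            have xTB: "x \<in> TB" using x xB by auto
            have "incs.col A E x y" using xB' ne w wA by (simp add: incs.col_def[OF iBA]) blast
            then show False using TB xTB True by blast
          next
            case False
            then have "y \<in> A" using y TA by auto
            then have "w \<in> B" using eAB w by auto
            then show False using wA AVs by auto
          qed
        qed
      qed
      have cU: "card (TA \<union> TB) = card TA + card TB"
        using TA TB AVs fin by (intro card_Un_disjoint) (auto intro: finite_subset)
      moreover have "card V = card A + card B" using AVs fin card_Un_disjoint by metis
      moreover have "r*(r-1)*card (TA \<union> TB) = r*(r-1)*card TA + r*(r-1)*card TB"
        unfolding cU by (rule add_mult_distrib2)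
      ultimately have "card V \<le> r*(r-1)*card (TA \<union> TB)" using TA(3) TB(3) by linarith
      then show ?thesis using gp by blast
    qed
  qed
qed


lemma part1:
  assumes np: "\<not> is_pp_incidence_graph V E (r-1)"
  shows "\<exists>T. gpack T \<and> card V \<le> r*(r-1)*card T"
proof -
  obtain v0 where v0: "v0 \<in> V" using neV by auto
  show ?thesis
  proof (cases "{u\<in>V. Hs\<^sup>*\<^sup>* v0 u} = V")
    case True
    have "\<forall>p\<in>V. \<forall>q\<in>V. Hs\<^sup>*\<^sup>* p q"
    proof (intro ballI)
      fix p q assume "p \<in> V" "q \<in> V"
      then have "Hs\<^sup>*\<^sup>* v0 p" "Hs\<^sup>*\<^sup>* v0 q" using True by blast+
      then show "Hs\<^sup>*\<^sup>* p q" using Hs_rsym rtranclp_trans by metis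
    qed
    then show ?thesis by (rule part1_conn)
  next
    case False
    then show ?thesis using part1_bip[OF v0 False] np by blast
  qed
qed

end

theorem theorem4:
  fixes V :: "'a set" and E :: "'a \<Rightarrow> 'a \<Rightarrow> bool" and r :: nat
  assumes "r \<ge> 3"
    and "simple_graph V E" and "V \<noteq> {}"
    and "connected_graph V E" and "regular V E r"
  shows "(\<not> is_pp_incidence_graph V E (r - 1) \<longrightarrow>
            real (ktuple_tdn V E (r - 1))
              \<le> (real (r * (r - 1)) - 1) / real (r * (r - 1)) * real (card V))
       \<and> (is_pp_incidence_graph V E (r - 1) \<longrightarrow>
            card V = 2 * (r * (r - 1) + 1)
            \<and> real (ktuple_tdn V E (r - 1))
                = real (r * (r - 1)) / real (r * (r - 1) + 1) * real (card V)
            \<and> ktuple_tdn V E (r - 1) = 2 * r * (r - 1))"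
proof -
  interpret G: rgraph V E r using assms by (unfold_locales)
  define D where "D = r * (r - 1)"
  have D0: "D > 0" using assms(1) D_def by simp
  show ?thesis
  proof (intro conjI impI)
    assume np: "\<not> is_pp_incidence_graph V E (r - 1)"
    obtain T where T: "G.gpack T" "card V \<le> D * card T" using G.part1[OF np] D_def by blast
    have TV: "T \<subseteq> V" using T(1) G.gpack_def by simp
    have "card T \<le> card V" using card_mono[OF G.finV TV] .
    have le: "ktuple_tdn V E (r-1) \<le> card V - card T" by (rule G.pack_bound[OF T(1)])
    have "real (ktuple_tdn V E (r-1)) \<le> real (card V) - real (card T)"
      using le \<open>card T \<le> card V\<close> by linarith
    also have "\<dots> \<le> (real D - 1) / real D * real (card V)"
    proof -
      have "real (card V) \<le> real D * real (card T)" using T(2) by (metis of_nat_le_iff of_nat_mult)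
      then have "(real (card V) - real (card T)) * real D \<le> (real D - 1) * real (card V)"
        by (simp add: algebra_simps)
      then show ?thesis using D0 by (simp add: field_simps)
    qed
    finally show "real (ktuple_tdn V E (r - 1)) \<le> (real (r * (r - 1)) - 1) / real (r * (r - 1)) * real (card V)"
      using D_def by simp
  next
    assume pp: "is_pp_incidence_graph V E (r - 1)"
    have p2: "card V = 2*(r*(r-1)+1)" "ktuple_tdn V E (r-1) = 2*r*(r-1)" using G.part2[OF pp] by auto
    show "card V = 2 * (r * (r - 1) + 1)" by (rule p2(1))
    show "ktuple_tdn V E (r - 1) = 2 * r * (r - 1)" by (rule p2(2))
    have cv: "real (card V) = 2 * (real D + 1)" using p2(1) D_def by simp
    have pos: "real D + 1 > 0" by simp
    have "real D / (real D + 1) * (2 * (real D + 1)) = 2 * real D" using pos by (simp add: field_simps)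
    then have "real (r * (r - 1)) / real (r * (r - 1) + 1) * real (card V) = 2 * real D"
      unfolding D_def[symmetric] cv by (simp add: add.commute)
    also have "\<dots> = real (ktuple_tdn V E (r - 1))" using p2(2) D_def by simp
    finally show "real (ktuple_tdn V E (r - 1)) = real (r * (r - 1)) / real (r * (r - 1) + 1) * real (card V)" by simp
  qed
qed


end
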